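(* Let $\mathcal{N}_{A'B'\to AB}$ be a bipartite replacer channel, $\mathcal{N}(\rho_{A'B'})=\operatorname{Tr}[\rho_{A'B'}]\,\omega_{AB}$ for a fixed state $\omega_{AB}$. Then $$E_N(\mathcal{N})=E_N(\omega_{AB}),\qquad \mathbf{R}(\mathcal{N})=\mathbf{R}(\omega_{AB}).$$
   Context: $T_X$ is the partial transpose on $X$. For a state, $E_N(\omega_{AB})=\log\|T_B(\omega_{AB})\|_1$. For a bipartite map (Alice: $A',A$; Bob: $B',B$), $E_N(\mathcal{M})=\log\|T_B\circ\mathcal{M}\circ T_{B'}\|_\diamond$ with $\|\mathcal{P}\|_\diamond=\sup_\psi\|(\mathrm{id}_{S_AS_B}\otimes\mathcal{P})(\psi_{S_AA'B'S_B})\|_1$ over pure states. $\mathbf{D}$ is a generalized divergence: a function $\mathbf{D}(\rho\|\sigma)$ ($\rho$ a state, $\sigma\ge0$) obeying $\mathbf{D}(\rho\|\sigma)\ge\mathbf{D}(\mathcal{E}(\rho)\|\mathcal{E}(\sigma))$ for all channels $\mathcal{E}$. Generalized channel divergence: $\mathbf{D}(\mathcal{N}\|\mathcal{M})=\sup_{\psi}\mathbf{D}((\mathrm{id}\otimes\mathcal{N})(\psi_{S_AA'B'S_B})\|(\mathrm{id}\otimes\mathcal{M})(\psi_{S_AA'B'S_B}))$ over pure states with $S_A\simeq A'$, $S_B\simeq B'$. Generalized Rains information of a bipartite channel: $\mathbf{R}(\mathcal{N})=\inf_{\mathcal{M}:E_N(\mathcal{M})\le0}\mathbf{D}(\mathcal{N}\|\mathcal{M})$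 over completely positive bipartite maps $\mathcal{M}_{A'B'\to AB}$. Generalized Rains relative entropy of a state: $\mathbf{R}(\omega_{AB})=\inf\{\mathbf{D}(\omega_{AB}\|\sigma_{AB}):\sigma_{AB}\ge0,\ E_N(\sigma_{AB})\le0\}$. *)

theory Defs
  imports "Jordan_Normal_Form.Spectral_Radius" "Jordan_Normal_Form.Schur_Decomposition"
          "HOL-Library.Extended_Real"
begin

(* Conventions: a system of dimension d is C^d; operators are complex d x d matrices.
   Composite system X Y with dims dX, dY: index i = x * dY + y. *)

definition mtrace :: "complex mat \<Rightarrow> complex" where
  "mtrace M = (\<Sum>i<dim_row M. M $$ (i,i))"

definition psd :: "nat \<Rightarrow> complex mat \<Rightarrow> bool" where
  "psd n X \<longleftrightarrow> X \<in> carrier_mat n n \<and>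
     (\<forall>v \<in> carrier_vec n. let q = (\<Sum>i<n. cnj (v $ i) * (X *\<^sub>v v) $ i) in Im q = 0 \<and> Re q \<ge> 0)"

definition is_state :: "nat \<Rightarrow> complex mat \<Rightarrow> bool" where
  "is_state n \<rho> \<longleftrightarrow> psd n \<rho> \<and> mtrace \<rho> = 1"

definition pure_dm :: "complex vec \<Rightarrow> complex mat" where
  "pure_dm \<psi> = mat (dim_vec \<psi>) (dim_vec \<psi>) (\<lambda>(i,j). \<psi> $ i * cnj (\<psi> $ j))"

definition unit_vecs :: "nat \<Rightarrow> complex vec set" where
  "unit_vecs d = {\<psi>. \<psi> \<in> carrier_vec d \<and> (\<Sum>i<d. (cmod (\<psi> $ i))\<^sup>2) = 1}"

(* trace norm = sum of singular values (with multiplicity) *)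
definition trace_norm :: "complex mat \<Rightarrow> real" where
  "trace_norm X = (let P = mat_adjoint X * X in
     (\<Sum>e\<in>spectrum P. real (order e (char_poly P)) * sqrt (Re e)))"

(* partial transpose on the second factor Y of X Y (dims dX, dY) *)
definition ptrans :: "nat \<Rightarrow> nat \<Rightarrow> complex mat \<Rightarrow> complex mat" where
  "ptrans dX dY M = mat (dX*dY) (dX*dY)
     (\<lambda>(i,j). M $$ ((i div dY) * dY + j mod dY, (j div dY) * dY + i mod dY))"

definition blk :: "nat \<Rightarrow> complex mat \<Rightarrow> nat \<Rightarrow> nat \<Rightarrow> complex mat" where
  "blk n X r s = mat n n (\<lambda>(i,j). X $$ (r*n + i, s*n + j))"

(* (id_R \<otimes> Phi) for a map Phi : n x n -> m x m, reference dimension k *)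
definition id_tensor :: "nat \<Rightarrow> nat \<Rightarrow> nat \<Rightarrow> (complex mat \<Rightarrow> complex mat) \<Rightarrow> complex mat \<Rightarrow> complex mat" where
  "id_tensor k n m \<Phi> X = mat (k*m) (k*m)
     (\<lambda>(i,j). \<Phi> (blk n X (i div m) (j div m)) $$ (i mod m, j mod m))"

definition lin_map :: "nat \<Rightarrow> nat \<Rightarrow> (complex mat \<Rightarrow> complex mat) \<Rightarrow> bool" where
  "lin_map n m \<Phi> \<longleftrightarrow> (\<forall>X \<in> carrier_mat n n. \<Phi> X \<in> carrier_mat m m) \<and>
     (\<forall>X \<in> carrier_mat n n. \<forall>Y \<in> carrier_mat n n. \<forall>a b.
        \<Phi> (a \<cdot>\<^sub>m X + b \<cdot>\<^sub>m Y) = a \<cdot>\<^sub>m \<Phi> X + b \<cdot>\<^sub>m \<Phi> Y)"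

definition completely_positive :: "nat \<Rightarrow> nat \<Rightarrow> (complex mat \<Rightarrow> complex mat) \<Rightarrow> bool" where
  "completely_positive n m \<Phi> \<longleftrightarrow> lin_map n m \<Phi> \<and>
     (\<forall>k X. psd (k*n) X \<longrightarrow> psd (k*m) (id_tensor k n m \<Phi> X))"

definition is_channel :: "nat \<Rightarrow> nat \<Rightarrow> (complex mat \<Rightarrow> complex mat) \<Rightarrow> bool" where
  "is_channel n m \<Phi> \<longleftrightarrow> completely_positive n m \<Phi> \<and>
     (\<forall>X \<in> carrier_mat n n. mtrace (\<Phi> X) = mtrace X)"

definition gen_divergence :: "(complex mat \<Rightarrow> complex mat \<Rightarrow> ereal) \<Rightarrow> bool" where
  "gen_divergence D \<longleftrightarrow> (\<forall>n m E \<rho> \<sigma>. is_channel n m E \<longrightarrow> is_state n \<rho> \<longrightarrow> psd n \<sigma> \<longrightarrow>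
      D (E \<rho>) (E \<sigma>) \<le> D \<rho> \<sigma>)"

definition EN_state :: "nat \<Rightarrow> nat \<Rightarrow> complex mat \<Rightarrow> real" where
  "EN_state dA dB \<omega> = log 2 (trace_norm (ptrans dA dB \<omega>))"

definition diamond_norm :: "nat \<Rightarrow> nat \<Rightarrow> (complex mat \<Rightarrow> complex mat) \<Rightarrow> real" where
  "diamond_norm n m P = Sup ((\<lambda>\<psi>. trace_norm (id_tensor n n m P (pure_dm \<psi>))) ` unit_vecs (n*n))"

definition EN_map :: "nat \<Rightarrow> nat \<Rightarrow> nat \<Rightarrow> nat \<Rightarrow> (complex mat \<Rightarrow> complex mat) \<Rightarrow> real" where
  "EN_map dA' dB' dA dB M =
     log 2 (diamond_norm (dA'*dB') (dA*dB) (ptrans dA dB \<circ> M \<circ> ptrans dA' dB'))"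

definition chan_div :: "(complex mat \<Rightarrow> complex mat \<Rightarrow> ereal) \<Rightarrow> nat \<Rightarrow> nat
    \<Rightarrow> (complex mat \<Rightarrow> complex mat) \<Rightarrow> (complex mat \<Rightarrow> complex mat) \<Rightarrow> ereal" where
  "chan_div D n m N M = (SUP \<psi>\<in>unit_vecs (n*n).
      D (id_tensor n n m N (pure_dm \<psi>)) (id_tensor n n m M (pure_dm \<psi>)))"

definition Rains_map :: "(complex mat \<Rightarrow> complex mat \<Rightarrow> ereal) \<Rightarrow> nat \<Rightarrow> nat \<Rightarrow> nat \<Rightarrow> nat
    \<Rightarrow> (complex mat \<Rightarrow> complex mat) \<Rightarrow> ereal" where
  "Rains_map D dA' dB' dA dB N = (INF M\<in>{M. completely_positive (dA'*dB') (dA*dB) M \<and>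
       EN_map dA' dB' dA dB M \<le> 0}. chan_div D (dA'*dB') (dA*dB) N M)"

definition Rains_state :: "(complex mat \<Rightarrow> complex mat \<Rightarrow> ereal) \<Rightarrow> nat \<Rightarrow> nat
    \<Rightarrow> complex mat \<Rightarrow> ereal" where
  "Rains_state D dA dB \<omega> = (INF \<sigma>\<in>{\<sigma>. psd (dA*dB) \<sigma> \<and> EN_state dA dB \<sigma> \<le> 0}. D \<omega> \<sigma>)"

end

theory Submission
  imports Defs
begin

lemma adj_index[simp]: "i < dim_col A \<Longrightarrow> j < dim_row A \<Longrightarrow> mat_adjoint A $$ (i,j) = cnj (A $$ (j,i))"
  unfolding mat_adjoint_def by (simp add: mat_of_rows_index)
lemma adj_dims[simp]: "dim_row (mat_adjoint A) = dim_col A" "dim_col (mat_adjoint A) = dim_row A"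
  unfolding mat_adjoint_def by simp_all
lemma adj_carrier[simp]: "A \<in> carrier_mat r c \<Longrightarrow> mat_adjoint A \<in> carrier_mat c r"
  unfolding carrier_mat_def mat_adjoint_def by simp

lemma order_prod_lin: "order e (\<Prod>a\<leftarrow>as. [:-a,1:]) = count_list as (e::complex)"
proof (induction as)
  case Nil then show ?case by (simp add: order_0I)
next
  case (Cons a as)
  have nz: "(\<Prod>a\<leftarrow>as. [:-a,1::complex:]) \<noteq> 0"
    by (auto simp: prod_list_zero_iff)
  have nz2: "[:-a,1::complex:] \<noteq> 0" by simp
  have "order e ([:-a,1:] * (\<Prod>a\<leftarrow>as. [:-a,1:])) = order e [:-a,1:] + order e (\<Prod>a\<leftarrow>as. [:-a,1:])"
    by (rule order_mult) (metis nz nz2 mult_eq_0_iff)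
  then show ?case using Cons by (simp add: order_linear')
qed

lemma poly_prod_lin_zero: "poly (\<Prod>a\<leftarrow>as. [:-a,1:]) (k::complex) = 0 \<longleftrightarrow> k \<in> set as"
  by (induction as) auto

lemma sum_count_real:
  "(\<Sum>x\<in>set xs. real (count_list xs x) * f x) = sum_list (map f xs)"
proof(induction xs)
  case (Cons x xs)
  show ?case
  proof cases
    assume xin: "x \<in> set xs"
    have "set (x#xs) = insert x (set xs - {x})" using xin by auto
    then have "(\<Sum>y\<in>set (x#xs). real (count_list (x#xs) y) * f y)
       = real (count_list (x#xs) x) * f x + (\<Sum>y\<in>set xs - {x}. real (count_list (x#xs) y) * f y)"
      by (simp add: sum.insert_remove)
    also have "(\<Sum>y\<in>set xs - {x}. real (count_list (x#xs) y) * f y) = (\<Sum>y\<in>set xs - {x}. real (count_list xs y) * f y)"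
      by (rule sum.cong) auto
    also have "\<dots> = (\<Sum>y\<in>set xs. real (count_list xs y) * f y) - real (count_list xs x) * f x"
      using xin by (simp add: sum_diff1)
    finally show ?thesis using Cons.IH by (simp add: algebra_simps)
  next
    assume xn: "x \<notin> set xs"
    have "(\<Sum>y\<in>set xs. real (count_list (x#xs) y) * f y) = (\<Sum>y\<in>set xs. real (count_list xs y) * f y)"
      by (rule sum.cong) (use xn in auto)
    then show ?thesis using Cons.IH xn by simp
  qed
qed simp

lemma tn_list:
  assumes X: "X \<in> carrier_mat r c"
    and cp: "char_poly (mat_adjoint X * X) = (\<Prod>a\<leftarrow>as. [:-a,1:])"
  shows "trace_norm X = (\<Sum>a\<leftarrow>as. sqrt (Re a))"
proof -
  have P: "mat_adjoint X * X \<in> carrier_mat c c" using X by auto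
  have sp: "spectrum (mat_adjoint X * X) = set as"
    unfolding spectrum_root_char_poly[OF P] cp poly_prod_lin_zero by auto
  show ?thesis
    unfolding trace_norm_def Let_def sp order_prod_lin cp
    by (rule sum_count_real)
qed


lemma mult_mat_vec_index: "A \<in> carrier_mat r c \<Longrightarrow> v \<in> carrier_vec c \<Longrightarrow> i < r \<Longrightarrow>
   (A *\<^sub>v v) $ i = (\<Sum>j<c. A $$ (i,j) * v $ j)"
  by (auto simp: scalar_prod_def lessThan_atLeast0)

lemma mult_mat_index: "A \<in> carrier_mat r c \<Longrightarrow> B \<in> carrier_mat c d \<Longrightarrow> i < r \<Longrightarrow> j < d \<Longrightarrow>
   (A * B) $$ (i,j) = (\<Sum>k<c. A $$ (i,k) * B $$ (k,j))"
  by (auto simp: scalar_prod_def lessThan_atLeast0)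

lemma quad_adj:
  assumes X: "X \<in> carrier_mat r c" and v: "v \<in> carrier_vec c"
  shows "(\<Sum>i<c. cnj (v$i) * ((mat_adjoint X * X) *\<^sub>v v) $ i) = (\<Sum>k<r. cnj ((X *\<^sub>v v)$k) * (X *\<^sub>v v)$k)"
proof -
  have P: "mat_adjoint X * X \<in> carrier_mat c c" using X by auto
  have "(\<Sum>i<c. cnj (v$i) * ((mat_adjoint X * X) *\<^sub>v v) $ i)
      = (\<Sum>i<c. cnj (v$i) * (\<Sum>j<c. (\<Sum>k<r. cnj (X$$(k,i)) * X$$(k,j)) * v $ j))"
  proof (intro sum.cong refl)
    fix i assume i: "i \<in> {..<c}"
    have "((mat_adjoint X * X) *\<^sub>v v) $ i = (\<Sum>j<c. (mat_adjoint X * X) $$ (i,j) * v $ j)"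
      using i by (intro mult_mat_vec_index[OF P v]) auto
    also have "\<dots> = (\<Sum>j<c. (\<Sum>k<r. cnj (X$$(k,i)) * X$$(k,j)) * v $ j)"
      using i X by (intro sum.cong refl) (subst mult_mat_index[OF adj_carrier[OF X] X], auto)
    finally show "cnj (v$i) * ((mat_adjoint X * X) *\<^sub>v v) $ i = cnj (v$i) * (\<Sum>j<c. (\<Sum>k<r. cnj (X$$(k,i)) * X$$(k,j)) * v $ j)" by simp
  qed
  also have "\<dots> = (\<Sum>i<c. \<Sum>j<c. \<Sum>k<r. cnj (v$i) * cnj (X$$(k,i)) * X$$(k,j) * v $ j)"
    by (simp add: sum_distrib_left sum_distrib_right mult.assoc)
  also have "\<dots> = (\<Sum>k<r. \<Sum>i<c. \<Sum>j<c. cnj (v$i) * cnj (X$$(k,i)) * X$$(k,j) * v $ j)"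
    by (simp add: sum.swap[of _ "{..<r}"])
  also have "\<dots> = (\<Sum>k<r. cnj ((X *\<^sub>v v)$k) * (X *\<^sub>v v)$k)"
  proof (intro sum.cong refl)
    fix k assume k: "k \<in> {..<r}"
    have "(X *\<^sub>v v)$k = (\<Sum>j<c. X $$ (k,j) * v $ j)" using k by (intro mult_mat_vec_index[OF X v]) auto
    then show "(\<Sum>i<c. \<Sum>j<c. cnj (v$i) * cnj (X$$(k,i)) * X$$(k,j) * v $ j) = cnj ((X *\<^sub>v v)$k) * (X *\<^sub>v v)$k"
      by (simp add: sum_distrib_left sum_distrib_right mult.assoc mult.left_commute) (rule sum.swap)
  qed
  finally show ?thesis .
qed

lemma cnj_self_sum: "(\<Sum>k\<in>S. cnj (f k) * f k) = complex_of_real (\<Sum>k\<in>S. (cmod (f k))\<^sup>2)"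
proof -
  have "\<And>z. cnj z * z = complex_of_real ((cmod z)\<^sup>2)" by (metis complex_norm_square mult.commute)
  then show ?thesis by (simp only: of_real_sum)
qed

lemma gram_eig:
  assumes X: "X \<in> carrier_mat r c"
    and cp: "char_poly (mat_adjoint X * X) = (\<Prod>a\<leftarrow>as. [:-a,1:])"
    and a: "a \<in> set as"
  shows "Im a = 0 \<and> Re a \<ge> 0"
proof -
  have P: "mat_adjoint X * X \<in> carrier_mat c c" using X by auto
  have "poly (char_poly (mat_adjoint X * X)) a = 0" unfolding cp using a
    by (induction as) auto
  then have "eigenvalue (mat_adjoint X * X) a" using eigenvalue_root_char_poly[OF P] by auto
  then obtain v where ev: "eigenvector (mat_adjoint X * X) v a" unfolding eigenvalue_def by auto
  then have v: "v \<in> carrier_vec c" and v0: "v \<noteq> 0\<^sub>v c" and Pv: "(mat_adjoint X * X) *\<^sub>v v = a \<cdot>\<^sub>v v"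
    unfolding eigenvector_def using P by auto
  define nv where "nv = (\<Sum>k<c. (cmod (v$k))\<^sup>2)"
  define nw where "nw = (\<Sum>k<r. (cmod ((X *\<^sub>v v)$k))\<^sup>2)"
  have "\<exists>k<c. v $ k \<noteq> 0" using v v0 by (metis eq_vecI carrier_vecD index_zero_vec(1,2))
  then obtain k0 where k0: "k0 < c" "v $ k0 \<noteq> 0" by auto
  have "nv \<ge> (cmod (v$k0))\<^sup>2" unfolding nv_def
    by (rule member_le_sum) (use k0 in auto)
  moreover have "(cmod (v$k0))\<^sup>2 > 0" using k0 by simp
  ultimately have nvp: "nv > 0" by linarith
  have nwp: "nw \<ge> 0" unfolding nw_def by (rule sum_nonneg) auto
  have "(\<Sum>i<c. cnj (v$i) * ((mat_adjoint X * X) *\<^sub>v v) $ i) = a * complex_of_real nv"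
  proof -
    have "(\<Sum>i<c. cnj (v$i) * ((mat_adjoint X * X) *\<^sub>v v) $ i) = (\<Sum>i<c. a * (cnj (v$i) * v$i))"
      unfolding Pv using v by (intro sum.cong refl) auto
    also have "\<dots> = a * complex_of_real nv" unfolding nv_def cnj_self_sum[symmetric] by (simp add: sum_distrib_left)
    finally show ?thesis .
  qed
  moreover have "(\<Sum>i<c. cnj (v$i) * ((mat_adjoint X * X) *\<^sub>v v) $ i) = complex_of_real nw"
    unfolding quad_adj[OF X v] nw_def cnj_self_sum ..
  ultimately have "a = complex_of_real (nw / nv)" using nvp
    by (simp add: field_simps)
  then show ?thesis using nvp nwp by simp
qed




lemma sum_split: "(\<Sum>i<c*d. f i) = (\<Sum>p<c. \<Sum>q<d. f (p*d+q))" for c d :: nat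
proof -
  have "(\<Sum>i<c*d. f i) = (\<Sum>p<c. sum f {p*d..<p*d+d})" by (rule sum.nat_group[symmetric])
  also have "\<dots> = (\<Sum>p<c. \<Sum>q<d. f (p*d+q))"
  proof (rule sum.cong[OF refl])
    fix p
    have "sum f {0 + p*d..<d + p*d} = sum (\<lambda>q. f (q + p*d)) {0..<d}"
      by (rule sum.shift_bounds_nat_ivl)
    then show "sum f {p*d..<p*d+d} = (\<Sum>q<d. f (p*d+q))"
      by (simp add: add.commute lessThan_atLeast0)
  qed
  finally show ?thesis .
qed

definition kron :: "complex mat \<Rightarrow> complex mat \<Rightarrow> complex mat" where
  "kron A B = mat (dim_row A * dim_row B) (dim_col A * dim_col B)
     (\<lambda>(i,j). A $$ (i div dim_row B, j div dim_col B) * B $$ (i mod dim_row B, j mod dim_col B))"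

lemma kron_carrier: "A \<in> carrier_mat a b \<Longrightarrow> B \<in> carrier_mat c d \<Longrightarrow> kron A B \<in> carrier_mat (a*c) (b*d)"
  unfolding kron_def carrier_mat_def by auto

lemma kron_dims[simp]: "dim_row (kron A B) = dim_row A * dim_row B" "dim_col (kron A B) = dim_col A * dim_col B"
  unfolding kron_def by auto

lemma kron_index: "i < dim_row A * dim_row B \<Longrightarrow> j < dim_col A * dim_col B \<Longrightarrow>
  kron A B $$ (i,j) = A $$ (i div dim_row B, j div dim_col B) * B $$ (i mod dim_row B, j mod dim_col B)"
  unfolding kron_def by auto

lemma div_lt: "i < a * (c::nat) \<Longrightarrow> i div c < a"
  by (simp add: less_mult_imp_div_less)
lemma mod_lt: "i < a * (c::nat) \<Longrightarrow> i mod c < c"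
  by (metis mod_less_divisor mult_0_right not_less_zero gr0I)

lemma kron_mult:
  assumes A: "A \<in> carrier_mat a b" and B: "B \<in> carrier_mat c d"
    and C: "C \<in> carrier_mat b e" and D: "D \<in> carrier_mat d f"
  shows "kron A B * kron C D = kron (A * C) (B * D)"
proof (rule eq_matI)
  fix i j assume i: "i < dim_row (kron (A * C) (B * D))" and j: "j < dim_col (kron (A * C) (B * D))"
  then have i: "i < a * c" and j: "j < e * f" using A B C D by auto
  have "(kron A B * kron C D) $$ (i,j) = (\<Sum>k<b*d. kron A B $$ (i,k) * kron C D $$ (k,j))"
    by (rule mult_mat_index[OF kron_carrier[OF A B] kron_carrier[OF C D] i j])
  also have "\<dots> = (\<Sum>p<b. \<Sum>q<d. kron A B $$ (i,p*d+q) * kron C D $$ (p*d+q,j))"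
    by (rule sum_split)
  also have "\<dots> = (\<Sum>p<b. \<Sum>q<d. (A $$ (i div c, p) * C $$ (p, j div f)) * (B $$ (i mod c, q) * D $$ (q, j mod f)))"
  proof (intro sum.cong refl)
    fix p q assume p: "p \<in> {..<b}" and q: "q \<in> {..<d}"
    have pq: "p*d+q < b*d" using p q
      by (metis lessThan_iff add.commute add_less_cancel_left less_le_trans mult_Suc mult_le_mono1 Suc_leI)
    have "(p*d+q) div d = p" "(p*d+q) mod d = q" using q by auto
    then show "kron A B $$ (i,p*d+q) * kron C D $$ (p*d+q,j) = (A $$ (i div c, p) * C $$ (p, j div f)) * (B $$ (i mod c, q) * D $$ (q, j mod f))"
      using A B C D i j pq by (simp add: kron_index)
  qed
  also have "\<dots> = (\<Sum>p<b. A $$ (i div c, p) * C $$ (p, j div f)) * (\<Sum>q<d. B $$ (i mod c, q) * D $$ (q, j mod f))"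
    by (simp add: sum_product)
  also have "\<dots> = kron (A * C) (B * D) $$ (i,j)"
  proof -
    have "kron (A * C) (B * D) $$ (i,j) = (A*C)$$(i div c, j div f) * (B*D)$$(i mod c, j mod f)"
      using A B C D i j by (subst kron_index) auto
    also have "\<dots> = (\<Sum>p<b. A $$ (i div c, p) * C $$ (p, j div f)) * (\<Sum>q<d. B $$ (i mod c, q) * D $$ (q, j mod f))"
      using i j by (simp only: mult_mat_index[OF A C div_lt[OF i] div_lt[OF j]] mult_mat_index[OF B D mod_lt[OF i] mod_lt[OF j]])
    finally show ?thesis by simp
  qed
  finally show "(kron A B * kron C D) $$ (i,j) = kron (A * C) (B * D) $$ (i,j)" .
qed (use A B C D in auto)




lemma kron_adj: "mat_adjoint (kron A B) = kron (mat_adjoint A) (mat_adjoint B)"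
proof (rule eq_matI)
  fix i j assume i: "i < dim_row (kron (mat_adjoint A) (mat_adjoint B))" and j: "j < dim_col (kron (mat_adjoint A) (mat_adjoint B))"
  then have i: "i < dim_col A * dim_col B" and j: "j < dim_row A * dim_row B" by auto
  show "mat_adjoint (kron A B) $$ (i, j) = kron (mat_adjoint A) (mat_adjoint B) $$ (i, j)"
    using i j by (simp add: kron_index div_lt mod_lt)
qed auto

lemma div_mod_eq_iff: "(i::nat) = j \<longleftrightarrow> i div b = j div b \<and> i mod b = j mod b"
  by (metis div_mult_mod_eq)

lemma kron_one: "kron (1\<^sub>m a) (1\<^sub>m b) = 1\<^sub>m (a*b)"
proof (rule eq_matI)
  fix i j assume i: "i < dim_row (1\<^sub>m (a*b))" and j: "j < dim_col (1\<^sub>m (a*b))"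
  then have i: "i < a * b" and j: "j < a * b" by auto
  show "kron (1\<^sub>m a) (1\<^sub>m b) $$ (i, j) = 1\<^sub>m (a * b) $$ (i, j)"
    using i j div_mod_eq_iff[of i j b] by (simp add: kron_index div_lt mod_lt)
qed auto

lemma kron_ut:
  assumes A: "A \<in> carrier_mat a a" and B: "B \<in> carrier_mat b b"
    and uA: "upper_triangular A" and uB: "upper_triangular B"
  shows "upper_triangular (kron A B)"
  unfolding upper_triangular_def
proof (intro allI impI)
  fix i j assume i: "i < dim_row (kron A B)" and ji: "j < i"
  then have i: "i < a * b" using A B by auto
  then have j: "j < a * b" using ji by auto
  have le: "j div b \<le> i div b" using ji by (simp add: div_le_mono)
  show "kron A B $$ (i, j) = 0"
  proof (cases "j div b < i div b")
    case True
    then have "A $$ (i div b, j div b) = 0" using uA A div_lt[OF i] by (auto simp: upper_triangular_def)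
    then show ?thesis using A B i j by (simp add: kron_index)
  next
    case False
    then have eq: "j div b = i div b" using le by auto
    have "i = i div b * b + i mod b" "j = j div b * b + j mod b" by simp_all
    then have "j = i div b * b + j mod b" using eq by simp
    then have "j mod b < i mod b" using ji \<open>i = i div b * b + i mod b\<close> by linarith
    then have "B $$ (i mod b, j mod b) = 0" using uB B mod_lt[OF i] by (auto simp: upper_triangular_def)
    then show ?thesis using A B i j by (simp add: kron_index)
  qed
qed

lemma kron_sim:
  assumes s1: "similar_mat_wit A T1 P1 Q1" and s2: "similar_mat_wit B T2 P2 Q2"
  shows "similar_mat_wit (kron A B) (kron T1 T2) (kron P1 P2) (kron Q1 Q2)"
proof -
  define a where "a = dim_row A"
  define b where "b = dim_row B"
  note c1 = similar_mat_witD[OF a_def s1]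
  note c2 = similar_mat_witD[OF b_def s2]
  note e1 = c1(1-3) and e2 = c2(1-3)
  note c1 = c1(4-7) and c2 = c2(4-7)
  have "kron P1 P2 * kron Q1 Q2 = kron (P1*Q1) (P2*Q2)" by (rule kron_mult[OF c1(3) c2(3) c1(4) c2(4)])
  also have "\<dots> = 1\<^sub>m (a*b)" unfolding e1(1,2) e2(1,2) kron_one ..
  finally have 1: "kron P1 P2 * kron Q1 Q2 = 1\<^sub>m (a*b)" .
  have "kron Q1 Q2 * kron P1 P2 = kron (Q1*P1) (Q2*P2)" by (rule kron_mult[OF c1(4) c2(4) c1(3) c2(3)])
  also have "\<dots> = 1\<^sub>m (a*b)" unfolding e1(1,2) e2(1,2) kron_one ..
  finally have 2: "kron Q1 Q2 * kron P1 P2 = 1\<^sub>m (a*b)" .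
  have "kron P1 P2 * kron T1 T2 = kron (P1*T1) (P2*T2)" by (rule kron_mult[OF c1(3) c2(3) c1(2) c2(2)])
  then have "kron P1 P2 * kron T1 T2 * kron Q1 Q2 = kron (P1*T1) (P2*T2) * kron Q1 Q2" by simp
  also have "\<dots> = kron (P1*T1*Q1) (P2*T2*Q2)"
    by (rule kron_mult[OF mult_carrier_mat[OF c1(3) c1(2)] mult_carrier_mat[OF c2(3) c2(2)] c1(4) c2(4)])
  finally have 3: "kron A B = kron P1 P2 * kron T1 T2 * kron Q1 Q2" using e1(3) e2(3) by simp
  have d: "dim_row (kron A B) = a * b" using a_def b_def by simp
  have cc: "kron A B \<in> carrier_mat (a*b) (a*b)" "kron T1 T2 \<in> carrier_mat (a*b) (a*b)"
     "kron P1 P2 \<in> carrier_mat (a*b) (a*b)" "kron Q1 Q2 \<in> carrier_mat (a*b) (a*b)"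
    using kron_carrier[OF c1(1) c2(1)] kron_carrier[OF c1(2) c2(2)] kron_carrier[OF c1(3) c2(3)] kron_carrier[OF c1(4) c2(4)] by auto
  show ?thesis unfolding similar_mat_wit_def Let_def d using 1 2 3 cc by blast
qed

lemma triang: assumes A: "(A::complex mat) \<in> carrier_mat n n"
  shows "\<exists>T P Q. similar_mat_wit A T P Q \<and> upper_triangular T"
proof -
  obtain as where cp: "char_poly A = (\<Prod>a\<leftarrow>as. [:-a,1:])" using char_poly_factorized[OF A] by auto
  obtain T P Q where sd: "schur_decomposition A as = (T,P,Q)" by (cases "schur_decomposition A as") auto
  show ?thesis using schur_decomposition[OF A cp sd] by auto
qed

lemma tn_tri:
  assumes X: "X \<in> carrier_mat r c"
    and s: "similar_mat_wit (mat_adjoint X * X) T P Q" and uT: "upper_triangular T"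
  shows "trace_norm X = (\<Sum>i<c. sqrt (Re (T$$(i,i))))"
    and "\<And>i. i < c \<Longrightarrow> Im (T$$(i,i)) = 0 \<and> Re (T$$(i,i)) \<ge> 0"
proof -
  have T: "T \<in> carrier_mat c c" using s X unfolding similar_mat_wit_def Let_def by auto
  have "char_poly (mat_adjoint X * X) = char_poly T"
    using s by (intro char_poly_similar) (auto simp: similar_mat_def)
  also have "\<dots> = (\<Prod>a\<leftarrow>diag_mat T. [:-a,1:])" by (rule char_poly_upper_triangular[OF T uT])
  finally have cp: "char_poly (mat_adjoint X * X) = (\<Prod>a\<leftarrow>diag_mat T. [:-a,1:])" .
  have dT: "diag_mat T = map (\<lambda>i. T$$(i,i)) [0..<c]" using T by (simp add: diag_mat_def)
  show "trace_norm X = (\<Sum>i<c. sqrt (Re (T$$(i,i))))"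
    unfolding tn_list[OF X cp] dT by (simp add: sum_list_distinct_conv_sum_set lessThan_atLeast0 comp_def)
  fix i assume "i < c"
  then have "T$$(i,i) \<in> set (diag_mat T)" unfolding dT by auto
  then show "Im (T$$(i,i)) = 0 \<and> Re (T$$(i,i)) \<ge> 0" by (rule gram_eig[OF X cp])
qed

lemma tn_nonneg: assumes X: "X \<in> carrier_mat r c" shows "trace_norm X \<ge> 0"
proof -
  obtain T P Q where s: "similar_mat_wit (mat_adjoint X * X) T P Q" and u: "upper_triangular T"
    using triang[OF mult_carrier_mat[OF adj_carrier[OF X] X]] by auto
  show ?thesis unfolding tn_tri(1)[OF X s u] using tn_tri(2)[OF X s u] by (intro sum_nonneg) auto
qed

lemma tn_kron:
  assumes X: "X \<in> carrier_mat r c" and Y: "Y \<in> carrier_mat s d"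
  shows "trace_norm (kron X Y) = trace_norm X * trace_norm Y"
proof -
  obtain T1 P1 Q1 where s1: "similar_mat_wit (mat_adjoint X * X) T1 P1 Q1" and u1: "upper_triangular T1"
    using triang[OF mult_carrier_mat[OF adj_carrier[OF X] X]] by auto
  obtain T2 P2 Q2 where s2: "similar_mat_wit (mat_adjoint Y * Y) T2 P2 Q2" and u2: "upper_triangular T2"
    using triang[OF mult_carrier_mat[OF adj_carrier[OF Y] Y]] by auto
  have T1: "T1 \<in> carrier_mat c c" using s1 X unfolding similar_mat_wit_def Let_def by auto
  have T2: "T2 \<in> carrier_mat d d" using s2 Y unfolding similar_mat_wit_def Let_def by auto
  have XY: "kron X Y \<in> carrier_mat (r*s) (c*d)" using kron_carrier[OF X Y] .
  have eq: "mat_adjoint (kron X Y) * kron X Y = kron (mat_adjoint X * X) (mat_adjoint Y * Y)"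
    unfolding kron_adj by (rule kron_mult[OF adj_carrier[OF X] adj_carrier[OF Y] X Y])
  have s: "similar_mat_wit (mat_adjoint (kron X Y) * kron X Y) (kron T1 T2) (kron P1 P2) (kron Q1 Q2)"
    unfolding eq by (rule kron_sim[OF s1 s2])
  have u: "upper_triangular (kron T1 T2)" by (rule kron_ut[OF T1 T2 u1 u2])
  have "trace_norm (kron X Y) = (\<Sum>i<c*d. sqrt (Re (kron T1 T2 $$ (i,i))))"
    by (rule tn_tri(1)[OF XY s u])
  also have "\<dots> = (\<Sum>p<c. \<Sum>q<d. sqrt (Re (kron T1 T2 $$ (p*d+q,p*d+q))))" by (rule sum_split)
  also have "\<dots> = (\<Sum>p<c. \<Sum>q<d. sqrt (Re (T1$$(p,p))) * sqrt (Re (T2$$(q,q))))"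
  proof (intro sum.cong refl)
    fix p q assume p: "p \<in> {..<c}" and q: "q \<in> {..<d}"
    have pq: "p*d+q < c*d" using p q
      by (metis lessThan_iff add.commute add_less_cancel_left less_le_trans mult_Suc mult_le_mono1 Suc_leI)
    have "(p*d+q) div d = p" "(p*d+q) mod d = q" using q by auto
    then have "kron T1 T2 $$ (p*d+q,p*d+q) = T1$$(p,p) * T2$$(q,q)" using T1 T2 pq by (simp add: kron_index)
    moreover have "Im (T1$$(p,p)) = 0" "Im (T2$$(q,q)) = 0"
      using tn_tri(2)[OF X s1 u1, of p] tn_tri(2)[OF Y s2 u2, of q] p q by auto
    ultimately show "sqrt (Re (kron T1 T2 $$ (p*d+q,p*d+q))) = sqrt (Re (T1$$(p,p))) * sqrt (Re (T2$$(q,q)))"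
      by (simp add: real_sqrt_mult)
  qed
  also have "\<dots> = trace_norm X * trace_norm Y"
    unfolding tn_tri(1)[OF X s1 u1] tn_tri(1)[OF Y s2 u2] by (simp add: sum_product)
  finally show ?thesis .
qed


lemma rowcol: "A \<in> carrier_mat r c \<Longrightarrow> B \<in> carrier_mat c d \<Longrightarrow> i < r \<Longrightarrow> j < d \<Longrightarrow>
   row A i \<bullet> col B j = (\<Sum>k<c. A $$ (i,k) * B $$ (k,j))"
  using mult_mat_index[of A r c B d i j] by simp

lemma sim_sq: assumes s: "similar_mat_wit R T P Q" shows "similar_mat_wit (R * R) (T * T) P Q"
proof -
  define c where "c = dim_row R"
  note cc = similar_mat_witD[OF c_def s]
  have R: "R \<in> carrier_mat c c" and T: "T \<in> carrier_mat c c" and P: "P \<in> carrier_mat c c" and Q: "Q \<in> carrier_mat c c"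
    using cc by auto
  have TQ: "T * Q \<in> carrier_mat c c" using T Q by auto
  have PTQ: "P * (T * Q) \<in> carrier_mat c c" using P TQ by auto
  have R': "R = P * (T * Q)" using cc(3) assoc_mult_mat[OF P T Q] by simp
  have "R * R = P * ((T * Q) * (P * (T * Q)))" unfolding R' by (rule assoc_mult_mat[OF P TQ PTQ])
  also have "(T * Q) * (P * (T * Q)) = T * (Q * (P * (T * Q)))" by (rule assoc_mult_mat[OF T Q PTQ])
  also have "Q * (P * (T * Q)) = (Q * P) * (T * Q)" by (rule assoc_mult_mat[OF Q P TQ, symmetric])
  also have "(Q * P) * (T * Q) = T * Q" unfolding cc(2) by (rule left_mult_one_mat[OF TQ])
  also have "T * (T * Q) = (T * T) * Q" by (rule assoc_mult_mat[OF T T Q, symmetric])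
  also have "P * ((T * T) * Q) = P * (T * T) * Q" using P T Q by (simp add: assoc_mult_mat[OF P _ Q])
  finally have e: "R * R = P * (T * T) * Q" .
  have "dim_row (R * R) = c" using R by simp
  then show ?thesis unfolding similar_mat_wit_def Let_def using e cc T R by auto
qed

lemma mtrace_mult_comm:
  assumes A: "A \<in> carrier_mat n m" and B: "B \<in> carrier_mat m n"
  shows "mtrace (A * B) = mtrace (B * A)"
proof -
  have "mtrace (A * B) = (\<Sum>i<n. \<Sum>k<m. A $$ (i,k) * B $$ (k,i))"
    unfolding mtrace_def using A B by (intro sum.cong) (auto simp: rowcol[OF A B])
  also have "\<dots> = (\<Sum>k<m. \<Sum>i<n. B $$ (k,i) * A $$ (i,k))"
    by (subst sum.swap) (simp add: mult.commute)
  also have "\<dots> = mtrace (B * A)"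
    unfolding mtrace_def using A B by (intro sum.cong) (auto simp: rowcol[OF B A])
  finally show ?thesis .
qed

lemma mtrace_sim:
  assumes s: "similar_mat_wit A T P Q"
  shows "mtrace A = mtrace T"
proof -
  define n where "n = dim_row A"
  note c = similar_mat_witD[OF n_def s]
  have "mtrace A = mtrace (P * (T * Q))" using c by (simp add: assoc_mult_mat[OF c(6) c(5) c(7)])
  also have "\<dots> = mtrace ((T * Q) * P)" by (rule mtrace_mult_comm[OF c(6)]) (use c in auto)
  also have "\<dots> = mtrace (T * (Q * P))" using c by (simp add: assoc_mult_mat[OF c(5) c(7) c(6)])
  also have "\<dots> = mtrace T" using c by simp
  finally show ?thesis .
qed

lemma ut_mult:
  assumes T: "T \<in> carrier_mat n n" and S: "S \<in> carrier_mat n n"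
    and uT: "upper_triangular T" and uS: "upper_triangular S"
  shows "upper_triangular (T * S)" "\<And>i. i < n \<Longrightarrow> (T * S) $$ (i,i) = T $$ (i,i) * S $$ (i,i)"
proof -
  show "upper_triangular (T * S)" unfolding upper_triangular_def
  proof (intro allI impI)
    fix i j assume i: "i < dim_row (T * S)" and ji: "j < i"
    then have i: "i < n" using T by auto
    have "(T * S) $$ (i,j) = (\<Sum>k<n. T $$ (i,k) * S $$ (k,j))" using i ji T S by (simp add: rowcol[OF T S])
    also have "\<dots> = 0"
    proof (intro sum.neutral ballI)
      fix k assume k: "k \<in> {..<n}"
      show "T $$ (i,k) * S $$ (k,j) = 0"
      proof (cases "k < i")
        case True then show ?thesis using uT T i by (auto simp: upper_triangular_def)
      next
        case False then have "j < k" using ji by auto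
        then show ?thesis using uS S k by (auto simp: upper_triangular_def)
      qed
    qed
    finally show "(T * S) $$ (i,j) = 0" .
  qed
  fix i assume i: "i < n"
  have "(T * S) $$ (i,i) = (\<Sum>k<n. T $$ (i,k) * S $$ (k,i))" using i T S by (simp add: rowcol[OF T S])
  also have "\<dots> = (\<Sum>k<n. if k = i then T $$ (i,i) * S $$ (i,i) else 0)"
  proof (intro sum.cong refl)
    fix k assume k: "k \<in> {..<n}"
    show "T $$ (i,k) * S $$ (k,i) = (if k = i then T $$ (i,i) * S $$ (i,i) else 0)"
    proof (cases "k < i")
      case True then show ?thesis using uT T i by (auto simp: upper_triangular_def)
    next
      case False
      show ?thesis
      proof (cases "k = i")
        case False then have "i < k" using \<open>\<not> k < i\<close> by auto
        then show ?thesis using uS S k False by (auto simp: upper_triangular_def)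
      qed simp
    qed
  qed
  also have "\<dots> = T $$ (i,i) * S $$ (i,i)" using i by simp
  finally show "(T * S) $$ (i,i) = T $$ (i,i) * S $$ (i,i)" .
qed

lemma adj_gram: assumes X: "(X::complex mat) \<in> carrier_mat r c"
  shows "mat_adjoint (mat_adjoint X * X) = mat_adjoint X * X"
proof (rule eq_matI)
  fix i j assume i: "i < dim_row (mat_adjoint X * X)" and j: "j < dim_col (mat_adjoint X * X)"
  then have i: "i < c" and j: "j < c" using X by auto
  have "mat_adjoint (mat_adjoint X * X) $$ (i,j) = cnj ((mat_adjoint X * X) $$ (j,i))" using i j X by simp
  also have "\<dots> = cnj (\<Sum>k<r. cnj (X $$ (k,j)) * X $$ (k,i))"
    using i j X by (subst mult_mat_index[OF adj_carrier[OF X] X]) auto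
  also have "\<dots> = (\<Sum>k<r. cnj (X $$ (k,i)) * X $$ (k,j))" by (simp add: mult.commute)
  also have "\<dots> = (mat_adjoint X * X) $$ (i,j)"
    using i j X by (subst mult_mat_index[OF adj_carrier[OF X] X]) auto
  finally show "mat_adjoint (mat_adjoint X * X) $$ (i,j) = (mat_adjoint X * X) $$ (i,j)" .
qed (use X in auto)

lemma cp_tri:
  assumes s: "similar_mat_wit A T P Q" and u: "upper_triangular T" and A: "A \<in> carrier_mat n n"
  shows "char_poly A = (\<Prod>a\<leftarrow>diag_mat T. [:-a,1:])"
proof -
  have T: "T \<in> carrier_mat n n" using similar_mat_witD2[OF A s] by auto
  have "char_poly A = char_poly T"
    using s by (intro char_poly_similar) (auto simp: similar_mat_def)
  also have "\<dots> = (\<Prod>a\<leftarrow>diag_mat T. [:-a,1:])" by (rule char_poly_upper_triangular[OF T u])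
  finally show ?thesis .
qed

lemma tn_gram:
  assumes X: "(X::complex mat) \<in> carrier_mat r c"
  shows "trace_norm (mat_adjoint X * X) = Re (mtrace (mat_adjoint X * X))"
proof -
  define R where "R = mat_adjoint X * X"
  have R: "R \<in> carrier_mat c c" using X unfolding R_def by auto
  obtain T P Q where s: "similar_mat_wit R T P Q" and u: "upper_triangular T"
    using triang[OF R] by auto
  note cc = similar_mat_witD2[OF R s]
  have cpR: "char_poly (mat_adjoint X * X) = (\<Prod>a\<leftarrow>diag_mat T. [:-a,1:])"
    using cp_tri[OF s u R] unfolding R_def .
  have ev: "Im (T$$(i,i)) = 0 \<and> Re (T$$(i,i)) \<ge> 0" if i: "i < c" for i
    by (rule gram_eig[OF X cpR]) (use i cc in \<open>auto simp: diag_mat_def\<close>)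
  have RR: "mat_adjoint R * R = R * R" unfolding R_def adj_gram[OF X] ..
  have s2: "similar_mat_wit (mat_adjoint R * R) (T * T) P Q" unfolding RR by (rule sim_sq[OF s])
  have u2: "upper_triangular (T * T)" using ut_mult[OF cc(5) cc(5) u u] by auto
  have "trace_norm R = (\<Sum>i<c. sqrt (Re ((T*T)$$(i,i))))" by (rule tn_tri(1)[OF R s2 u2])
  also have "\<dots> = (\<Sum>i<c. Re (T$$(i,i)))"
  proof (intro sum.cong refl)
    fix i assume i: "i \<in> {..<c}"
    then have "(T*T)$$(i,i) = T$$(i,i) * T$$(i,i)" using ut_mult(2)[OF cc(5) cc(5) u u] by auto
    moreover have "Im (T$$(i,i)) = 0" "Re (T$$(i,i)) \<ge> 0" using ev i by auto
    ultimately show "sqrt (Re ((T*T)$$(i,i))) = Re (T$$(i,i))"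
      by (simp add: real_sqrt_mult)
  qed
  also have "\<dots> = Re (mtrace T)" unfolding mtrace_def using cc by simp
  also have "\<dots> = Re (mtrace R)" using mtrace_sim[OF s] by simp
  finally show ?thesis unfolding R_def .
qed

lemma sqrt_le_half: "(x::real) \<ge> 0 \<Longrightarrow> sqrt x \<le> (1 + x) / 2"
proof -
  assume x: "x \<ge> 0"
  have "0 \<le> (sqrt x - 1)^2" by simp
  also have "\<dots> = x - 2 * sqrt x + 1" using x by (simp add: power2_eq_square algebra_simps)
  finally show ?thesis by simp
qed

lemma mtrace_gram: assumes X: "(X::complex mat) \<in> carrier_mat r c"
  shows "Re (mtrace (mat_adjoint X * X)) = (\<Sum>i<c. \<Sum>k<r. (cmod (X$$(k,i)))\<^sup>2)"
proof -
  have "mtrace (mat_adjoint X * X) = (\<Sum>i<c. \<Sum>k<r. cnj (X$$(k,i)) * X$$(k,i))"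
    unfolding mtrace_def using X by (intro sum.cong) (auto simp: rowcol[OF adj_carrier[OF X] X])
  also have "\<dots> = (\<Sum>i<c. complex_of_real (\<Sum>k<r. (cmod (X$$(k,i)))\<^sup>2))"
    by (simp only: cnj_self_sum)
  finally show ?thesis by (simp only: of_real_sum[symmetric] Re_complex_of_real)
qed

lemma tn_bound:
  assumes X: "X \<in> carrier_mat r c"
  shows "trace_norm X \<le> (real c + (\<Sum>i<c. \<Sum>k<r. (cmod (X$$(k,i)))\<^sup>2)) / 2"
proof -
  have R: "mat_adjoint X * X \<in> carrier_mat c c" using X by auto
  obtain T P Q where s: "similar_mat_wit (mat_adjoint X * X) T P Q" and u: "upper_triangular T"
    using triang[OF R] by auto
  have "trace_norm X = (\<Sum>i<c. sqrt (Re (T$$(i,i))))" by (rule tn_tri(1)[OF X s u])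
  also have "\<dots> \<le> (\<Sum>i<c. (1 + Re (T$$(i,i))) / 2)"
    by (intro sum_mono sqrt_le_half) (use tn_tri(2)[OF X s u] in auto)
  also have "\<dots> = (real c + Re (mtrace T)) / 2"
    unfolding mtrace_def using similar_mat_witD2[OF R s]
    by (simp add: sum_divide_distrib[symmetric] sum.distrib)
  also have "Re (mtrace T) = Re (mtrace (mat_adjoint X * X))" using mtrace_sim[OF s] by simp
  finally show ?thesis unfolding mtrace_gram[OF X] .
qed


definition qf :: "nat \<Rightarrow> (nat \<Rightarrow> nat \<Rightarrow> complex) \<Rightarrow> (nat \<Rightarrow> complex) \<Rightarrow> complex" where
  "qf m S v = (\<Sum>i<m. \<Sum>j<m. cnj (v i) * S i j * v j)"

definition fpsd :: "nat \<Rightarrow> (nat \<Rightarrow> nat \<Rightarrow> complex) \<Rightarrow> bool" where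
  "fpsd m S \<longleftrightarrow> (\<forall>v. Im (qf m S v) = 0 \<and> Re (qf m S v) \<ge> 0)"

lemma qf_vec: assumes A: "A \<in> carrier_mat m m" and v: "v \<in> carrier_vec m"
  shows "(\<Sum>i<m. cnj (v $ i) * (A *\<^sub>v v) $ i) = qf m (\<lambda>i j. A $$ (i,j)) (\<lambda>i. v $ i)"
  unfolding qf_def
  by (intro sum.cong refl) (simp add: mult_mat_vec_index[OF A v] sum_distrib_left mult.assoc)

lemma qf_cong: "(\<And>i. i < m \<Longrightarrow> v i = w i) \<Longrightarrow> qf m S v = qf m S w"
  unfolding qf_def by (intro sum.cong refl) auto

lemma psd_fpsd: "psd m A \<longleftrightarrow> A \<in> carrier_mat m m \<and> fpsd m (\<lambda>i j. A $$ (i,j))"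
proof
  assume p: "psd m A"
  then have A: "A \<in> carrier_mat m m" unfolding psd_def by auto
  show "A \<in> carrier_mat m m \<and> fpsd m (\<lambda>i j. A $$ (i,j))"
    unfolding fpsd_def
  proof (rule conjI[OF A], intro allI)
    fix f :: "nat \<Rightarrow> complex"
    have v: "vec m f \<in> carrier_vec m" by simp
    have "qf m (\<lambda>i j. A $$ (i,j)) f = qf m (\<lambda>i j. A $$ (i,j)) (\<lambda>i. vec m f $ i)"
      by (rule qf_cong) simp
    also have "\<dots> = (\<Sum>i<m. cnj (vec m f $ i) * (A *\<^sub>v vec m f) $ i)" by (rule qf_vec[OF A v, symmetric])
    finally show "Im (qf m (\<lambda>i j. A $$ (i,j)) f) = 0 \<and> 0 \<le> Re (qf m (\<lambda>i j. A $$ (i,j)) f)"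
      using p v unfolding psd_def Let_def by metis
  qed
next
  assume h: "A \<in> carrier_mat m m \<and> fpsd m (\<lambda>i j. A $$ (i,j))"
  show "psd m A" unfolding psd_def Let_def
  proof (intro conjI ballI)
    show "A \<in> carrier_mat m m" using h by auto
    fix v :: "complex vec" assume v: "v \<in> carrier_vec m"
    have "(\<Sum>i<m. cnj (v $ i) * (A *\<^sub>v v) $ i) = qf m (\<lambda>i j. A $$ (i,j)) (\<lambda>i. v $ i)"
      using h v by (intro qf_vec) auto
    then show "Im (\<Sum>i<m. cnj (v $ i) * (A *\<^sub>v v) $ i) = 0" "0 \<le> Re (\<Sum>i<m. cnj (v $ i) * (A *\<^sub>v v) $ i)"
      using h unfolding fpsd_def by auto
  qed
qed

lemma qf_one: assumes i: "i < m"
  shows "qf m S (\<lambda>x. if x = i then a else 0) = cnj a * S i i * a"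
proof -
  have "qf m S (\<lambda>x. if x = i then a else 0) = (\<Sum>x<m. if x = i then (\<Sum>y<m. cnj a * S i y * (if y = i then a else 0)) else 0)"
    unfolding qf_def by (intro sum.cong refl) auto
  also have "\<dots> = (\<Sum>y<m. cnj a * S i y * (if y = i then a else 0))" using i by simp
  also have "\<dots> = (\<Sum>y<m. if y = i then cnj a * S i i * a else 0)" by (intro sum.cong refl) auto
  also have "\<dots> = cnj a * S i i * a" using i by simp
  finally show ?thesis .
qed

lemma qf_add: "qf m S (\<lambda>x. v x + w x) = qf m S v + qf m S w
   + (\<Sum>i<m. \<Sum>j<m. cnj (v i) * S i j * w j) + (\<Sum>i<m. \<Sum>j<m. cnj (w i) * S i j * v j)"
  unfolding qf_def by (simp add: algebra_simps sum.distrib)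

lemma qf_add_delta: assumes p: "p < m"
  shows "qf m S (\<lambda>x. v x + (if x = p then c else 0)) = qf m S v + cnj c * S p p * c
   + (\<Sum>i<m. cnj (v i) * S i p) * c + cnj c * (\<Sum>j<m. S p j * v j)"
proof -
  have 1: "(\<Sum>i<m. \<Sum>j<m. cnj (v i) * S i j * (if j = p then c else 0)) = (\<Sum>i<m. cnj (v i) * S i p) * c"
  proof -
    have "(\<Sum>i<m. \<Sum>j<m. cnj (v i) * S i j * (if j = p then c else 0)) = (\<Sum>i<m. \<Sum>j<m. if j = p then cnj (v i) * S i p * c else 0)"
      by (intro sum.cong refl) auto
    also have "\<dots> = (\<Sum>i<m. cnj (v i) * S i p * c)" using p by simp
    finally show ?thesis by (simp add: sum_distrib_right)
  qed
  have 2: "(\<Sum>i<m. \<Sum>j<m. cnj (if i = p then c else 0) * S i j * v j) = cnj c * (\<Sum>j<m. S p j * v j)"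
  proof -
    have "(\<Sum>i<m. \<Sum>j<m. cnj (if i = p then c else 0) * S i j * v j) = (\<Sum>i<m. if i = p then (\<Sum>j<m. cnj c * S p j * v j) else 0)"
      by (intro sum.cong refl) auto
    also have "\<dots> = (\<Sum>j<m. cnj c * S p j * v j)" using p by simp
    finally show ?thesis by (simp add: sum_distrib_left mult.assoc)
  qed
  show ?thesis unfolding qf_add 1 2 qf_one[OF p] by simp
qed

lemma fpsd_diag: assumes "fpsd m S" "i < m" shows "Im (S i i) = 0 \<and> Re (S i i) \<ge> 0"
  using assms(1) qf_one[OF assms(2), of S 1] unfolding fpsd_def by (metis mult_1 mult_1_right complex_cnj_one)

lemma fpsd_herm: assumes S: "fpsd m S" and i: "i < m" and j: "j < m"
  shows "S j i = cnj (S i j)"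
proof (cases "i = j")
  case True
  then show ?thesis using fpsd_diag[OF S i] by (simp add: complex_eq_iff)
next
  case False
  have d: "Im (S i i) = 0" "Im (S j j) = 0" using fpsd_diag[OF S i] fpsd_diag[OF S j] by auto
  have sdl: "(\<Sum>x<m. cnj (if x = i then a else 0) * f x) = cnj a * f i" for a :: complex and f :: "nat \<Rightarrow> complex"
  proof -
    have "(\<Sum>x<m. cnj (if x = i then a else 0) * f x) = (\<Sum>x<m. if x = i then cnj a * f i else 0)"
      by (intro sum.cong refl) auto
    then show ?thesis using i by simp
  qed
  have sdr: "(\<Sum>x<m. f x * (if x = i then a else 0)) = f i * a" for a :: complex and f :: "nat \<Rightarrow> complex"
  proof -
    have "(\<Sum>x<m. f x * (if x = i then a else 0)) = (\<Sum>x<m. if x = i then f i * a else 0)"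
      by (intro sum.cong refl) auto
    then show ?thesis using i by simp
  qed
  have e1: "qf m S (\<lambda>x. (if x = i then 1 else 0) + (if x = j then 1 else 0)) = S i i + S j j + S i j + S j i"
  proof -
    have "qf m S (\<lambda>x. (if x = i then 1 else 0) + (if x = j then 1 else 0)) = qf m S (\<lambda>x. if x = i then 1 else 0) + cnj 1 * S j j * 1
      + (\<Sum>x<m. cnj (if x = i then 1 else 0) * S x j) * 1 + cnj 1 * (\<Sum>y<m. S j y * (if y = i then 1 else 0))"
      by (rule qf_add_delta[OF j])
    also have "\<dots> = S i i + S j j + S i j + S j i" unfolding sdl sdr qf_one[OF i] by simp
    finally show ?thesis .
  qed
  have e2: "qf m S (\<lambda>x. (if x = i then 1 else 0) + (if x = j then \<i> else 0)) = S i i + S j j + S i j * \<i> - \<i> * S j i"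
  proof -
    have "qf m S (\<lambda>x. (if x = i then 1 else 0) + (if x = j then \<i> else 0)) = qf m S (\<lambda>x. if x = i then 1 else 0) + cnj \<i> * S j j * \<i>
      + (\<Sum>x<m. cnj (if x = i then 1 else 0) * S x j) * \<i> + cnj \<i> * (\<Sum>y<m. S j y * (if y = i then 1 else 0))"
      by (rule qf_add_delta[OF j])
    also have "\<dots> = S i i + S j j + S i j * \<i> - \<i> * S j i" unfolding sdl sdr qf_one[OF i] by (simp add: algebra_simps)
    finally show ?thesis .
  qed
  have "Im (S i i + S j j + S i j + S j i) = 0" using S unfolding fpsd_def e1[symmetric] by blast
  moreover have "Im (S i i + S j j + S i j * \<i> - \<i> * S j i) = 0" using S unfolding fpsd_def e2[symmetric] by blast
  ultimately show ?thesis using d by (simp add: complex_eq_iff)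
qed


lemma sum_delta_l: "i < (m::nat) \<Longrightarrow> (\<Sum>x<m. cnj (if x = i then a else 0) * f x) = cnj a * f i"
proof -
  assume i: "i < m"
  have "(\<Sum>x<m. cnj (if x = i then a else 0) * f x) = (\<Sum>x<m. if x = i then cnj a * f i else 0)"
    by (intro sum.cong refl) auto
  then show ?thesis using i by simp
qed
lemma sum_delta_r: "i < (m::nat) \<Longrightarrow> (\<Sum>x<m. f x * (if x = i then a else 0)) = f i * (a::complex)"
proof -
  assume i: "i < m"
  have "(\<Sum>x<m. f x * (if x = i then a else 0)) = (\<Sum>x<m. if x = i then f i * a else 0)"
    by (intro sum.cong refl) auto
  then show ?thesis using i by simp
qed

lemma fpsd_zero_diag: assumes S: "fpsd m S" and p: "p < m" and z: "S p p = 0" and j: "j < m"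
  shows "S p j = 0"
proof (rule ccontr)
  assume nz: "S p j \<noteq> 0"
  then have jp: "j \<noteq> p" using z by auto
  define z where "z = S p j"
  define t where "t = - (Re (S j j) + 1) / (2 * (cmod z)\<^sup>2)"
  have zp: "(cmod z)\<^sup>2 > 0" using nz unfolding z_def by simp
  have h: "S j p = cnj z" unfolding z_def by (rule fpsd_herm[OF S p j])
  have "qf m S (\<lambda>x. (if x = j then 1 else 0) + (if x = p then of_real t * z else 0)) = qf m S (\<lambda>x. if x = j then 1 else 0) + cnj (of_real t * z) * S p p * (of_real t * z)
      + (\<Sum>x<m. cnj (if x = j then 1 else 0) * S x p) * (of_real t * z) + cnj (of_real t * z) * (\<Sum>y<m. S p y * (if y = j then 1 else 0))"
    by (rule qf_add_delta[OF p])
  also have "\<dots> = S j j + of_real t * (cnj z * z) + of_real t * (cnj z * z)"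
    unfolding sum_delta_l[OF j] sum_delta_r[OF j] qf_one[OF j] z h z_def[symmetric] by (simp add: algebra_simps)
  also have "cnj z * z = of_real ((cmod z)\<^sup>2)" by (metis complex_norm_square mult.commute)
  finally have q: "Re (qf m S (\<lambda>x. (if x = j then 1 else 0) + (if x = p then of_real t * z else 0))) = Re (S j j) + 2 * t * (cmod z)\<^sup>2"
    by simp
  have "2 * t * (cmod z)\<^sup>2 = - (Re (S j j) + 1)" unfolding t_def using zp by (simp add: field_simps)
  then have "Re (qf m S (\<lambda>x. (if x = j then 1 else 0) + (if x = p then of_real t * z else 0))) < 0" unfolding q by simp
  then show False using S unfolding fpsd_def by (metis not_le)
qed

lemma fpsd_decomp_aux:
  "\<forall>S. fpsd m S \<longrightarrow> (\<forall>i<m. \<forall>j<m. i < m - d \<or> j < m - d \<longrightarrow> S i j = 0) \<longrightarrow>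
     (\<exists>(L::nat) w. \<forall>a<m. \<forall>b<m. S a b = (\<Sum>l<L. w l a * cnj (w l b)))"
proof (induction d)
  case 0
  show ?case
  proof (intro allI impI)
    fix S assume "fpsd m S" and z: "\<forall>i<m. \<forall>j<m. i < m - 0 \<or> j < m - 0 \<longrightarrow> S i j = 0"
    show "\<exists>(L::nat) w. \<forall>a<m. \<forall>b<m. S a b = (\<Sum>l<L. w l a * cnj (w l b))"
      by (rule exI[of _ 0], rule exI[of _ "\<lambda>_ _. 0"]) (use z in auto)
  qed
next
  case (Suc d)
  show ?case
  proof (intro allI impI)
    fix S assume S: "fpsd m S" and z: "\<forall>i<m. \<forall>j<m. i < m - Suc d \<or> j < m - Suc d \<longrightarrow> S i j = 0"
    show "\<exists>(L::nat) w. \<forall>a<m. \<forall>b<m. S a b = (\<Sum>l<L. w l a * cnj (w l b))"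
    proof (cases "d < m")
      case False
      then have "m - Suc d = m - d" by auto
      then show ?thesis using Suc.IH S z by auto
    next
      case True
      define p where "p = m - Suc d"
      have p: "p < m" and pd: "m - d = Suc p" using True unfolding p_def by auto
      have zp: "\<And>i j. i < m \<Longrightarrow> j < m \<Longrightarrow> i < p \<or> j < p \<Longrightarrow> S i j = 0" using z unfolding p_def by auto
      show ?thesis
      proof (cases "S p p = 0")
        case True
        have r: "S p j = 0" if "j < m" for j using fpsd_zero_diag[OF S p True that] .
        have c: "S i p = 0" if "i < m" for i using r[OF that] fpsd_herm[OF S p that] by simp
        have "\<forall>i<m. \<forall>j<m. i < m - d \<or> j < m - d \<longrightarrow> S i j = 0"
          unfolding pd using zp r c by (metis less_Suc_eq)
        then show ?thesis using Suc.IH S by auto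
      next
        case False
        have dg: "Im (S p p) = 0" "Re (S p p) \<ge> 0" using fpsd_diag[OF S p] by auto
        define r where "r = sqrt (Re (S p p))"
        have rp: "r > 0" unfolding r_def using dg False by (simp add: complex_eq_iff)
        have Spp: "S p p = of_real r * of_real r" unfolding r_def using dg
          by (simp add: complex_eq_iff)
        have r0: "(of_real r :: complex) \<noteq> 0" using rp by simp
        define u where "u j = S j p / of_real r" for j
        define S' where "S' i j = S i j - u i * cnj (u j)" for i j
        have herm: "\<And>i j. i < m \<Longrightarrow> j < m \<Longrightarrow> S j i = cnj (S i j)" by (rule fpsd_herm[OF S])
        have S': "fpsd m S'" unfolding fpsd_def
        proof
          fix v
          define g where "g = (\<Sum>j<m. S p j * v j)"
          define c where "c = - g / (of_real r * of_real r)"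
          have hg: "(\<Sum>i<m. cnj (v i) * S i p) = cnj g"
            unfolding g_def cnj_sum
          proof (intro sum.cong refl)
            fix i assume "i \<in> {..<m}"
            then have "S i p = cnj (S p i)" using herm[OF p, of i] by simp
            then show "cnj (v i) * S i p = cnj (S p i * v i)" by simp
          qed
          have e1: "qf m S' v = qf m S v - (\<Sum>i<m. cnj (v i) * u i) * (\<Sum>j<m. cnj (u j) * v j)"
            unfolding qf_def S'_def by (simp add: algebra_simps sum_subtractf sum_distrib_left sum_distrib_right) (rule sum.swap)
          have hu: "(\<Sum>j<m. cnj (u j) * v j) = g / of_real r"
            unfolding g_def sum_divide_distrib
          proof (intro sum.cong refl)
            fix j assume "j \<in> {..<m}"
            then have "S j p = cnj (S p j)" using herm[OF p, of j] by simp
            then show "cnj (u j) * v j = S p j * v j / of_real r" unfolding u_def by simp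
          qed
          have hu2: "(\<Sum>i<m. cnj (v i) * u i) = cnj g / of_real r"
            unfolding u_def hg[symmetric] by (simp add: sum_divide_distrib mult.assoc)
          have "qf m S (\<lambda>x. v x + (if x = p then c else 0)) = qf m S v + cnj c * S p p * c + cnj g * c + cnj c * g"
            unfolding qf_add_delta[OF p] hg g_def ..
          also have "\<dots> = qf m S' v" unfolding e1 hu hu2 c_def Spp using rp by (simp add: field_simps)
          finally have "qf m S' v = qf m S (\<lambda>x. v x + (if x = p then c else 0))" ..
          then show "Im (qf m S' v) = 0 \<and> 0 \<le> Re (qf m S' v)" using S unfolding fpsd_def by simp
        qed
        have zc: "\<forall>i<m. \<forall>j<m. i < m - d \<or> j < m - d \<longrightarrow> S' i j = 0"
        proof (intro allI impI)
          fix i j assume i: "i < m" and j: "j < m" and ij: "i < m - d \<or> j < m - d"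
          then have ij: "i < p \<or> i = p \<or> j < p \<or> j = p" unfolding pd by auto
          have u0: "u k = 0" if "k < p" for k unfolding u_def using zp[of k p] that p by auto
          show "S' i j = 0"
          proof -
            { assume "i < p" then have ?thesis unfolding S'_def using u0 zp i j by auto }
            moreover { assume "j < p" then have ?thesis unfolding S'_def using u0 zp i j by auto }
            moreover { assume ip: "i = p"
              have "S' i j = S p j - S p p / of_real r * cnj (S j p / of_real r)" unfolding S'_def u_def ip ..
              also have "\<dots> = S p j - (of_real r * of_real r) / of_real r * (S p j / of_real r)"
                unfolding Spp herm[OF p j] by simp
              also have "\<dots> = 0" using r0 by simp
              finally have ?thesis . }
            moreover { assume jp: "j = p"
              have "S' i j = S i p - S i p / of_real r * cnj (S p p / of_real r)" unfolding S'_def u_def jp ..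
              also have "\<dots> = S i p - S i p / of_real r * ((of_real r * of_real r) / of_real r)"
                unfolding Spp by simp
              also have "\<dots> = 0" using r0 by simp
              finally have ?thesis . }
            ultimately show ?thesis using ij by blast
          qed
        qed
        obtain L :: nat and w where w: "\<forall>a<m. \<forall>b<m. S' a b = (\<Sum>l<L. w l a * cnj (w l b))"
          using Suc.IH[rule_format (no_asm), OF S' zc] by blast
        define w' where "w' l = (if l < L then w l else u)" for l
        show ?thesis
        proof (rule exI[of _ "Suc L"], rule exI[of _ w'], intro allI impI)
          fix a b assume a: "a < m" and b: "b < m"
          have "S a b = S' a b + u a * cnj (u b)" unfolding S'_def by simp
          also have "\<dots> = (\<Sum>l<L. w' l a * cnj (w' l b)) + w' L a * cnj (w' L b)"
            using w a b unfolding w'_def by simp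
          also have "\<dots> = (\<Sum>l<Suc L. w' l a * cnj (w' l b))" by simp
          finally show "S a b = (\<Sum>l<Suc L. w' l a * cnj (w' l b))" .
        qed
      qed
    qed
  qed
qed

lemma fpsd_decomp: assumes "fpsd m S"
  shows "\<exists>(L::nat) w. \<forall>a<m. \<forall>b<m. S a b = (\<Sum>l<L. w l a * cnj (w l b))"
  using fpsd_decomp_aux[of m m] assms by auto


lemma idx_lt: "p < c \<Longrightarrow> q < d \<Longrightarrow> p * d + q < c * (d::nat)"
  by (metis add.commute add_less_cancel_left less_le_trans mult_Suc mult_le_mono1 Suc_leI)

lemma blk_carrier: "blk n X r s \<in> carrier_mat n n" unfolding blk_def by simp

lemma id_tensor_index: "i < k * m \<Longrightarrow> j < k * m \<Longrightarrow>
  id_tensor k n m \<Phi> X $$ (i,j) = \<Phi> (blk n X (i div m) (j div m)) $$ (i mod m, j mod m)"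
  unfolding id_tensor_def by simp

lemma id_tensor_carrier: "id_tensor k n m \<Phi> X \<in> carrier_mat (k*m) (k*m)"
  unfolding id_tensor_def by simp

lemma fpsd_sum: assumes "finite C" "\<And>c. c \<in> C \<Longrightarrow> Im (f c) = 0 \<and> Re (f c) \<ge> 0"
  shows "Im (sum f C) = 0 \<and> Re (sum f C) \<ge> 0"
  using assms by (simp add: Im_sum Re_sum sum_nonneg)

lemma kraus_qf:
  fixes K :: "'c \<Rightarrow> nat \<Rightarrow> nat \<Rightarrow> complex"
  shows "(\<Sum>r<k. \<Sum>a<m. \<Sum>s<k. \<Sum>b<m. cnj (v (r*m+a)) * (\<Sum>c\<in>C. \<Sum>x<n. \<Sum>y<n. K c a x * X (r*n+x) (s*n+y) * cnj (K c b y)) * v (s*m+b))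
   = (\<Sum>c\<in>C. \<Sum>r<k. \<Sum>x<n. \<Sum>s<k. \<Sum>y<n. cnj (\<Sum>a<m. cnj (K c a x) * v (r*m+a)) * X (r*n+x) (s*n+y) * (\<Sum>b<m. cnj (K c b y) * v (s*m+b)))"
  by (simp add: sum_distrib_left sum_distrib_right mult_ac
     sum.swap[of _ "{..<k}" C] sum.swap[of _ "{..<m}" C] sum.swap[of _ "{..<n}" C]
     sum.swap[of _ "{..<m}" "{..<k}"] sum.swap[of _ "{..<m}" "{..<n}"] sum.swap[of _ "{..<k}" "{..<n}"])


lemma qf_split: "qf (k*m) S v = (\<Sum>r<k. \<Sum>a<m. \<Sum>s<k. \<Sum>b<m. cnj (v (r*m+a)) * S (r*m+a) (s*m+b) * v (s*m+b))"
  unfolding qf_def sum_split[of _ k m] by (simp add: sum_split[of _ k m])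

lemma blk_index: "i < n \<Longrightarrow> j < n \<Longrightarrow> blk n X r s $$ (i,j) = X $$ (r*n+i, s*n+j)"
  unfolding blk_def by simp

lemma kraus_cp:
  fixes K :: "'c \<Rightarrow> nat \<Rightarrow> nat \<Rightarrow> complex"
  assumes fin: "finite C"
    and Phi: "\<And>X. X \<in> carrier_mat n n \<Longrightarrow> \<Phi> X = mat m m (\<lambda>(a,b). \<Sum>c\<in>C. \<Sum>x<n. \<Sum>y<n. K c a x * X$$(x,y) * cnj (K c b y))"
  shows "completely_positive n m \<Phi>"
proof -
  have lin: "lin_map n m \<Phi>"
    unfolding lin_map_def
  proof (intro conjI ballI allI)
    fix X :: "complex mat" assume "X \<in> carrier_mat n n" then show "\<Phi> X \<in> carrier_mat m m" using Phi by simp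
  next
    fix X Y :: "complex mat" and a b :: complex assume X: "X \<in> carrier_mat n n" and Y: "Y \<in> carrier_mat n n"
    have XY: "a \<cdot>\<^sub>m X + b \<cdot>\<^sub>m Y \<in> carrier_mat n n" using X Y by simp
    show "\<Phi> (a \<cdot>\<^sub>m X + b \<cdot>\<^sub>m Y) = a \<cdot>\<^sub>m \<Phi> X + b \<cdot>\<^sub>m \<Phi> Y"
    proof (rule eq_matI)
      fix i j assume i: "i < dim_row (a \<cdot>\<^sub>m \<Phi> X + b \<cdot>\<^sub>m \<Phi> Y)" and j: "j < dim_col (a \<cdot>\<^sub>m \<Phi> X + b \<cdot>\<^sub>m \<Phi> Y)"
      then have i: "i < m" and j: "j < m" using Phi X Y by auto
      have "\<Phi> (a \<cdot>\<^sub>m X + b \<cdot>\<^sub>m Y) $$ (i,j) = (\<Sum>c\<in>C. \<Sum>x<n. \<Sum>y<n. K c i x * (a \<cdot>\<^sub>m X + b \<cdot>\<^sub>m Y)$$(x,y) * cnj (K c j y))"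
        using Phi[OF XY] i j by simp
      also have "\<dots> = (\<Sum>c\<in>C. \<Sum>x<n. \<Sum>y<n. K c i x * (a * X$$(x,y) + b * Y$$(x,y)) * cnj (K c j y))"
        using X Y by (intro sum.cong refl) auto
      also have "\<dots> = a * (\<Sum>c\<in>C. \<Sum>x<n. \<Sum>y<n. K c i x * X$$(x,y) * cnj (K c j y)) + b * (\<Sum>c\<in>C. \<Sum>x<n. \<Sum>y<n. K c i x * Y$$(x,y) * cnj (K c j y))"
        by (simp add: algebra_simps sum.distrib sum_distrib_left)
      also have "\<dots> = (a \<cdot>\<^sub>m \<Phi> X + b \<cdot>\<^sub>m \<Phi> Y) $$ (i,j)" using Phi[OF X] Phi[OF Y] i j by simp
      finally show "\<Phi> (a \<cdot>\<^sub>m X + b \<cdot>\<^sub>m Y) $$ (i,j) = (a \<cdot>\<^sub>m \<Phi> X + b \<cdot>\<^sub>m \<Phi> Y) $$ (i,j)" .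
    qed (use Phi X Y in auto)
  qed
  show ?thesis unfolding completely_positive_def
  proof (intro conjI lin allI impI)
    fix k and X :: "complex mat" assume p: "psd (k*n) X"
    then have X: "X \<in> carrier_mat (k*n) (k*n)" and fX: "fpsd (k*n) (\<lambda>i j. X $$ (i,j))"
      unfolding psd_fpsd by auto
    define Y where "Y = id_tensor k n m \<Phi> X"
    have Yc: "Y \<in> carrier_mat (k*m) (k*m)" unfolding Y_def by (rule id_tensor_carrier)
    have ent: "Y $$ (r*m+a, s*m+b) = (\<Sum>c\<in>C. \<Sum>x<n. \<Sum>y<n. K c a x * X $$ (r*n+x, s*n+y) * cnj (K c b y))"
      if r: "r < k" and a: "a < m" and s: "s < k" and b: "b < m" for r a s b
    proof -
      have "Y $$ (r*m+a, s*m+b) = \<Phi> (blk n X r s) $$ (a, b)"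
        unfolding Y_def using r a s b by (simp add: id_tensor_index idx_lt)
      also have "\<dots> = (\<Sum>c\<in>C. \<Sum>x<n. \<Sum>y<n. K c a x * blk n X r s $$ (x,y) * cnj (K c b y))"
        using Phi[OF blk_carrier] a b by simp
      also have "\<dots> = (\<Sum>c\<in>C. \<Sum>x<n. \<Sum>y<n. K c a x * X $$ (r*n+x, s*n+y) * cnj (K c b y))"
        by (intro sum.cong refl) (simp add: blk_index)
      finally show ?thesis .
    qed
    show "psd (k*m) (id_tensor k n m \<Phi> X)"
      unfolding Y_def[symmetric] psd_fpsd fpsd_def
    proof (rule conjI[OF Yc], intro allI)
      fix v :: "nat \<Rightarrow> complex"
      define w where "w c p = (\<Sum>a<m. cnj (K c a (p mod n)) * v ((p div n)*m + a))" for c p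
      have "qf (k*m) (\<lambda>i j. Y $$ (i,j)) v = (\<Sum>r<k. \<Sum>a<m. \<Sum>s<k. \<Sum>b<m. cnj (v (r*m+a)) * Y $$ (r*m+a, s*m+b) * v (s*m+b))"
        by (rule qf_split)
      also have "\<dots> = (\<Sum>r<k. \<Sum>a<m. \<Sum>s<k. \<Sum>b<m. cnj (v (r*m+a)) * (\<Sum>c\<in>C. \<Sum>x<n. \<Sum>y<n. K c a x * X $$ (r*n+x, s*n+y) * cnj (K c b y)) * v (s*m+b))"
        by (intro sum.cong refl) (simp add: ent)
      also have "\<dots> = (\<Sum>c\<in>C. \<Sum>r<k. \<Sum>x<n. \<Sum>s<k. \<Sum>y<n. cnj (\<Sum>a<m. cnj (K c a x) * v (r*m+a)) * X $$ (r*n+x, s*n+y) * (\<Sum>b<m. cnj (K c b y) * v (s*m+b)))"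
        by (rule kraus_qf[where X = "\<lambda>p q. X $$ (p,q)"])
      also have "\<dots> = (\<Sum>c\<in>C. qf (k*n) (\<lambda>i j. X $$ (i,j)) (w c))"
        unfolding qf_split
        by (intro sum.cong refl) (simp add: w_def)
      finally have eq: "qf (k*m) (\<lambda>i j. Y $$ (i,j)) v = (\<Sum>c\<in>C. qf (k*n) (\<lambda>i j. X $$ (i,j)) (w c))" .
      show "Im (qf (k*m) (\<lambda>i j. Y $$ (i,j)) v) = 0 \<and> 0 \<le> Re (qf (k*m) (\<lambda>i j. Y $$ (i,j)) v)"
        unfolding eq by (rule fpsd_sum[OF fin]) (use fX in \<open>auto simp: fpsd_def\<close>)
    qed
  qed
qed



definition rhoS :: "nat \<Rightarrow> complex vec \<Rightarrow> complex mat" where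
  "rhoS n \<psi> = mat n n (\<lambda>(r,s). \<Sum>t<n. \<psi> $ (r*n+t) * cnj (\<psi> $ (s*n+t)))"

lemma rhoS_gram: "rhoS n \<psi> = mat_adjoint (mat n n (\<lambda>(t,s). cnj (\<psi> $ (s*n+t)))) * mat n n (\<lambda>(t,s). cnj (\<psi> $ (s*n+t)))"
proof (rule eq_matI)
  fix i j assume i: "i < dim_row (mat_adjoint (mat n n (\<lambda>(t,s). cnj (\<psi> $ (s*n+t)))) * mat n n (\<lambda>(t,s). cnj (\<psi> $ (s*n+t))))"
    and j: "j < dim_col (mat_adjoint (mat n n (\<lambda>(t,s). cnj (\<psi> $ (s*n+t)))) * mat n n (\<lambda>(t,s). cnj (\<psi> $ (s*n+t))))"
  then have i: "i < n" and j: "j < n" by auto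
  have c: "mat n n (\<lambda>(t,s). cnj (\<psi> $ (s*n+t))) \<in> carrier_mat n n" by simp
  show "rhoS n \<psi> $$ (i, j) = (mat_adjoint (mat n n (\<lambda>(t,s). cnj (\<psi> $ (s*n+t)))) * mat n n (\<lambda>(t,s). cnj (\<psi> $ (s*n+t)))) $$ (i, j)"
    unfolding mult_mat_index[OF adj_carrier[OF c] c i j] rhoS_def using i j by (auto intro: sum.cong)
qed (auto simp: rhoS_def)

lemma rhoS_carrier: "rhoS n \<psi> \<in> carrier_mat n n" unfolding rhoS_def by simp

lemma mtrace_rhoS: assumes "\<psi> \<in> unit_vecs (n*n)" shows "mtrace (rhoS n \<psi>) = 1"
proof -
  have "mtrace (rhoS n \<psi>) = (\<Sum>r<n. \<Sum>t<n. \<psi> $ (r*n+t) * cnj (\<psi> $ (r*n+t)))"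
    unfolding mtrace_def rhoS_def by simp
  also have "\<dots> = (\<Sum>i<n*n. \<psi> $ i * cnj (\<psi> $ i))" by (rule sum_split[symmetric])
  also have "\<dots> = complex_of_real (\<Sum>i<n*n. (cmod (\<psi> $ i))\<^sup>2)"
    unfolding cnj_self_sum[symmetric] by (simp add: mult.commute)
  also have "\<dots> = 1" using assms unfolding unit_vecs_def by simp
  finally show ?thesis .
qed

lemma tn_rhoS: assumes "\<psi> \<in> unit_vecs (n*n)" shows "trace_norm (rhoS n \<psi>) = 1"
proof -
  have c: "mat n n (\<lambda>(t,s). cnj (\<psi> $ (s*n+t))) \<in> carrier_mat n n" by simp
  show ?thesis using tn_gram[OF c] mtrace_rhoS[OF assms] unfolding rhoS_gram[symmetric] by simp
qed

lemma pure_dm_index: "i < dim_vec \<psi> \<Longrightarrow> j < dim_vec \<psi> \<Longrightarrow> pure_dm \<psi> $$ (i,j) = \<psi> $ i * cnj (\<psi> $ j)"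
  unfolding pure_dm_def by simp

lemma mtrace_blk: "mtrace (blk n X r s) = (\<Sum>t<n. X $$ (r*n+t, s*n+t))"
  unfolding mtrace_def blk_def by simp

lemma out_rep:
  assumes Z: "Z \<in> carrier_mat m m" and psi: "\<psi> \<in> carrier_vec (n*n)"
    and Phi: "\<And>Y. Y \<in> carrier_mat n n \<Longrightarrow> \<Phi> Y = mtrace Y \<cdot>\<^sub>m Z"
  shows "id_tensor n n m \<Phi> (pure_dm \<psi>) = kron (rhoS n \<psi>) Z"
proof (rule eq_matI)
  fix i j assume i: "i < dim_row (kron (rhoS n \<psi>) Z)" and j: "j < dim_col (kron (rhoS n \<psi>) Z)"
  then have i: "i < n*m" and j: "j < n*m" using Z by (auto simp: rhoS_def)
  have id: "i div m < n" "j div m < n" "i mod m < m" "j mod m < m" using i j by (auto simp: div_lt mod_lt)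
  have "id_tensor n n m \<Phi> (pure_dm \<psi>) $$ (i,j) = (mtrace (blk n (pure_dm \<psi>) (i div m) (j div m)) \<cdot>\<^sub>m Z) $$ (i mod m, j mod m)"
    using i j by (simp add: id_tensor_index Phi[OF blk_carrier])
  also have "\<dots> = mtrace (blk n (pure_dm \<psi>) (i div m) (j div m)) * Z $$ (i mod m, j mod m)"
    using Z id by simp
  also have "mtrace (blk n (pure_dm \<psi>) (i div m) (j div m)) = rhoS n \<psi> $$ (i div m, j div m)"
    unfolding mtrace_blk rhoS_def using id psi
    by (auto intro!: sum.cong simp: pure_dm_index idx_lt)
  finally show "id_tensor n n m \<Phi> (pure_dm \<psi>) $$ (i, j) = kron (rhoS n \<psi>) Z $$ (i, j)"
    using i j Z by (simp add: kron_index rhoS_def)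
qed (use Z in \<open>auto simp: id_tensor_def rhoS_def\<close>)

lemma ptrans_carrier: "ptrans dX dY M \<in> carrier_mat (dX*dY) (dX*dY)"
  unfolding ptrans_def by simp

lemma ptrans_idx: "i < dX*dY \<Longrightarrow> j < dX*dY \<Longrightarrow> (i div dY)*dY + j mod dY < dX*(dY::nat)"
  by (intro idx_lt) (auto simp: div_lt mod_lt)

lemma ptrans_index: "i < dX*dY \<Longrightarrow> j < dX*dY \<Longrightarrow>
  ptrans dX dY M $$ (i,j) = M $$ ((i div dY) * dY + j mod dY, (j div dY) * dY + i mod dY)"
  unfolding ptrans_def by simp

lemma mtrace_ptrans: "dim_row M = dX*dY \<Longrightarrow> mtrace (ptrans dX dY M) = mtrace M"
  unfolding mtrace_def ptrans_def by simp

lemma ptrans_smult: assumes "M \<in> carrier_mat (dX*dY) (dX*dY)"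
  shows "ptrans dX dY (c \<cdot>\<^sub>m M) = c \<cdot>\<^sub>m ptrans dX dY M"
  by (rule eq_matI) (use assms in \<open>auto simp: ptrans_def ptrans_idx\<close>)

lemma ptrans_lin: "lin_map (dX*dY) (dX*dY) (ptrans dX dY)"
  unfolding lin_map_def
  by (auto simp: ptrans_carrier intro!: eq_matI simp: ptrans_def ptrans_idx)

lemma rep_ptrans:
  assumes Z: "Z \<in> carrier_mat (dA*dB) (dA*dB)" and Y: "Y \<in> carrier_mat (dA'*dB') (dA'*dB')"
  shows "(ptrans dA dB \<circ> (\<lambda>\<rho>. mtrace \<rho> \<cdot>\<^sub>m Z) \<circ> ptrans dA' dB') Y = mtrace Y \<cdot>\<^sub>m ptrans dA dB Z"
  using Y by (simp add: mtrace_ptrans ptrans_smult[OF Z])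

lemma unit_vec_unit: "0 < N \<Longrightarrow> unit_vec N 0 \<in> unit_vecs N"
proof -
  assume N: "0 < N"
  have "(\<Sum>i<N. (cmod (unit_vec N 0 $ i))\<^sup>2) = (\<Sum>i<N. if i = 0 then 1 else 0)"
    by (intro sum.cong refl) (auto simp: unit_vec_def)
  also have "\<dots> = 1" using N by simp
  finally show ?thesis unfolding unit_vecs_def by simp
qed

lemma diamond_rep:
  assumes Z: "Z \<in> carrier_mat (dA*dB) (dA*dB)" and n0: "0 < dA'*dB'"
  shows "diamond_norm (dA'*dB') (dA*dB) (ptrans dA dB \<circ> (\<lambda>\<rho>. mtrace \<rho> \<cdot>\<^sub>m Z) \<circ> ptrans dA' dB')
         = trace_norm (ptrans dA dB Z)"
proof -
  let ?n = "dA'*dB'" and ?m = "dA*dB"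
  let ?P = "ptrans dA dB \<circ> (\<lambda>\<rho>. mtrace \<rho> \<cdot>\<^sub>m Z) \<circ> ptrans dA' dB'"
  have W: "ptrans dA dB Z \<in> carrier_mat ?m ?m" by (rule ptrans_carrier)
  have "(\<lambda>\<psi>. trace_norm (id_tensor ?n ?n ?m ?P (pure_dm \<psi>))) ` unit_vecs (?n*?n) = {trace_norm (ptrans dA dB Z)}"
  proof -
    have "trace_norm (id_tensor ?n ?n ?m ?P (pure_dm \<psi>)) = trace_norm (ptrans dA dB Z)" if psi: "\<psi> \<in> unit_vecs (?n*?n)" for \<psi>
    proof -
      have pc: "\<psi> \<in> carrier_vec (?n*?n)" using psi unfolding unit_vecs_def by auto
      have "id_tensor ?n ?n ?m ?P (pure_dm \<psi>) = kron (rhoS ?n \<psi>) (ptrans dA dB Z)"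
        by (rule out_rep[OF W pc]) (rule rep_ptrans[OF Z])
      then show ?thesis using tn_kron[OF rhoS_carrier W] tn_rhoS[OF psi] by simp
    qed
    moreover have "unit_vecs (?n*?n) \<noteq> {}" using unit_vec_unit[of "?n*?n"] n0 by auto
    ultimately show ?thesis by auto
  qed
  then show ?thesis unfolding diamond_norm_def by simp
qed

lemma EN_rep:
  assumes Z: "Z \<in> carrier_mat (dA*dB) (dA*dB)" and n0: "0 < dA'*dB'"
  shows "EN_map dA' dB' dA dB (\<lambda>\<rho>. mtrace \<rho> \<cdot>\<^sub>m Z) = EN_state dA dB Z"
  unfolding EN_map_def EN_state_def diamond_rep[OF Z n0] ..


lemma delta2: assumes a: "a < N" and b: "b < (N::nat)"
  shows "(\<Sum>x<N. \<Sum>y<N. (\<alpha> * (if x = a then 1 else 0)) * X x y * cnj (\<beta> * (if y = b then 1 else 0))) = \<alpha> * X a b * cnj \<beta>"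
proof -
  have inner: "(\<Sum>y<N. (\<alpha> * (if x = a then 1 else 0)) * X x y * cnj (\<beta> * (if y = b then 1 else 0))) = (if x = a then \<alpha> * X a b * cnj \<beta> else 0)" for x
  proof (cases "x = a")
    case True
    have "(\<Sum>y<N. (\<alpha> * (if x = a then 1 else 0)) * X x y * cnj (\<beta> * (if y = b then 1 else 0))) = (\<Sum>y<N. if y = b then \<alpha> * X a b * cnj \<beta> else 0)"
      using True by (intro sum.cong refl) auto
    also have "\<dots> = \<alpha> * X a b * cnj \<beta>" using b by simp
    finally show ?thesis using True by simp
  qed simp
  have "(\<Sum>x<N. \<Sum>y<N. (\<alpha> * (if x = a then 1 else 0)) * X x y * cnj (\<beta> * (if y = b then 1 else 0)))
      = (\<Sum>x<N. if x = a then \<alpha> * X a b * cnj \<beta> else 0)"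
    unfolding inner ..
  also have "\<dots> = \<alpha> * X a b * cnj \<beta>" using a by simp
  finally show ?thesis .
qed

lemma psd_pure: assumes psi: "\<psi> \<in> carrier_vec N" shows "psd N (pure_dm \<psi>)"
  unfolding psd_fpsd
proof (intro conjI)
  show "pure_dm \<psi> \<in> carrier_mat N N" using psi unfolding pure_dm_def by auto
  show "fpsd N (\<lambda>i j. pure_dm \<psi> $$ (i, j))" unfolding fpsd_def
  proof
    fix v
    define h where "h = (\<Sum>j<N. cnj (\<psi> $ j) * v j)"
    have "qf N (\<lambda>i j. pure_dm \<psi> $$ (i, j)) v = (\<Sum>i<N. \<Sum>j<N. cnj (v i) * (\<psi> $ i * cnj (\<psi> $ j)) * v j)"
      unfolding qf_def using psi by (intro sum.cong refl) (auto simp: pure_dm_index)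
    also have "\<dots> = cnj h * h" unfolding h_def cnj_sum sum_product by (simp add: mult_ac)
    also have "\<dots> = of_real ((cmod h)\<^sup>2)" by (metis complex_norm_square mult.commute)
    finally show "Im (qf N (\<lambda>i j. pure_dm \<psi> $$ (i, j)) v) = 0 \<and> 0 \<le> Re (qf N (\<lambda>i j. pure_dm \<psi> $$ (i, j)) v)"
      by simp
  qed
qed

lemma rep_cp: assumes s: "psd m \<sigma>" shows "completely_positive n m (\<lambda>\<rho>. mtrace \<rho> \<cdot>\<^sub>m \<sigma>)"
proof -
  have sc: "\<sigma> \<in> carrier_mat m m" and fs: "fpsd m (\<lambda>i j. \<sigma> $$ (i,j))" using s unfolding psd_fpsd by auto
  obtain L :: nat and w where w: "\<forall>a<m. \<forall>b<m. \<sigma> $$ (a,b) = (\<Sum>l<L. w l a * cnj (w l b))"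
    using fpsd_decomp[OF fs] by auto
  define K where "K c a x = w (fst c) a * (if x = snd c then 1 else 0)" for c :: "nat \<times> nat" and a x
  show ?thesis
  proof (rule kraus_cp[where C = "{..<L} \<times> {..<n}" and K = K])
    fix X :: "complex mat" assume X: "X \<in> carrier_mat n n"
    show "mtrace X \<cdot>\<^sub>m \<sigma> = mat m m (\<lambda>(a,b). \<Sum>c\<in>{..<L} \<times> {..<n}. \<Sum>x<n. \<Sum>y<n. K c a x * X $$ (x,y) * cnj (K c b y))"
    proof (rule eq_matI)
      fix a b assume a: "a < dim_row (mat m m (\<lambda>(a,b). \<Sum>c\<in>{..<L} \<times> {..<n}. \<Sum>x<n. \<Sum>y<n. K c a x * X $$ (x,y) * cnj (K c b y)))"
        and b: "b < dim_col (mat m m (\<lambda>(a,b). \<Sum>c\<in>{..<L} \<times> {..<n}. \<Sum>x<n. \<Sum>y<n. K c a x * X $$ (x,y) * cnj (K c b y)))"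
      then have a: "a < m" and b: "b < m" by auto
      have "(\<Sum>c\<in>{..<L} \<times> {..<n}. \<Sum>x<n. \<Sum>y<n. K c a x * X $$ (x,y) * cnj (K c b y))
          = (\<Sum>c\<in>{..<L} \<times> {..<n}. w (fst c) a * X $$ (snd c, snd c) * cnj (w (fst c) b))"
        unfolding K_def
      proof (intro sum.cong refl)
        fix c :: "nat \<times> nat" assume c: "c \<in> {..<L} \<times> {..<n}"
        show "(\<Sum>x<n. \<Sum>y<n. w (fst c) a * (if x = snd c then 1 else 0) * X $$ (x,y) * cnj (w (fst c) b * (if y = snd c then 1 else 0)))
           = w (fst c) a * X $$ (snd c, snd c) * cnj (w (fst c) b)"
          by (rule delta2) (use c in auto)
      qed
      also have "\<dots> = (\<Sum>(l,t)\<in>{..<L} \<times> {..<n}. w l a * X $$ (t, t) * cnj (w l b))"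
        by (simp add: split_def)
      also have "\<dots> = (\<Sum>l<L. \<Sum>t<n. w l a * X $$ (t, t) * cnj (w l b))"
        by (simp add: sum.cartesian_product)
      also have "\<dots> = mtrace X * \<sigma> $$ (a,b)"
        unfolding mtrace_def w[rule_format, OF a b] using X
        by (simp add: sum_distrib_left sum_distrib_right mult_ac sum.swap[of _ "{..<n}" "{..<L}"])
      finally show "(mtrace X \<cdot>\<^sub>m \<sigma>) $$ (a, b) = mat m m (\<lambda>(a,b). \<Sum>c\<in>{..<L} \<times> {..<n}. \<Sum>x<n. \<Sum>y<n. K c a x * X $$ (x,y) * cnj (K c b y)) $$ (a, b)"
        using a b sc by simp
    qed (use sc in auto)
  qed simp
qed

lemma mtrace_kron: assumes A: "A \<in> carrier_mat n n" and B: "B \<in> carrier_mat m m"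
  shows "mtrace (kron A B) = mtrace A * mtrace B"
proof -
  have "mtrace (kron A B) = (\<Sum>i<n*m. A $$ (i div m, i div m) * B $$ (i mod m, i mod m))"
    unfolding mtrace_def using A B by (intro sum.cong) (auto simp: kron_index)
  also have "\<dots> = (\<Sum>p<n. \<Sum>q<m. A $$ (p,p) * B $$ (q,q))" by (simp add: sum_split)
  also have "\<dots> = mtrace A * mtrace B" unfolding mtrace_def using A B by (simp add: sum_product)
  finally show ?thesis .
qed

lemma app_channel: assumes psi: "\<psi> \<in> unit_vecs (n*n)"
  shows "is_channel m (n*m) (\<lambda>X. kron (rhoS n \<psi>) X)"
  unfolding is_channel_def
proof (intro conjI ballI)
  have pc: "\<psi> \<in> carrier_vec (n*n)" using psi unfolding unit_vecs_def by auto
  define K where "K t i x = \<psi> $ ((i div m)*n + t) * (if x = i mod m then 1 else 0)" for t i x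
  show "completely_positive m (n*m) (\<lambda>X. kron (rhoS n \<psi>) X)"
  proof (rule kraus_cp[where C = "{..<n}" and K = K])
    fix X :: "complex mat" assume X: "X \<in> carrier_mat m m"
    show "kron (rhoS n \<psi>) X = mat (n*m) (n*m) (\<lambda>(a,b). \<Sum>c\<in>{..<n}. \<Sum>x<m. \<Sum>y<m. K c a x * X $$ (x,y) * cnj (K c b y))"
    proof (rule eq_matI)
      fix i j assume i: "i < dim_row (mat (n*m) (n*m) (\<lambda>(a,b). \<Sum>c\<in>{..<n}. \<Sum>x<m. \<Sum>y<m. K c a x * X $$ (x,y) * cnj (K c b y)))"
        and j: "j < dim_col (mat (n*m) (n*m) (\<lambda>(a,b). \<Sum>c\<in>{..<n}. \<Sum>x<m. \<Sum>y<m. K c a x * X $$ (x,y) * cnj (K c b y)))"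
      then have i: "i < n*m" and j: "j < n*m" by auto
      have id: "i div m < n" "j div m < n" "i mod m < m" "j mod m < m" using i j by (auto simp: div_lt mod_lt)
      have "(\<Sum>c\<in>{..<n}. \<Sum>x<m. \<Sum>y<m. K c i x * X $$ (x,y) * cnj (K c j y))
          = (\<Sum>t<n. \<psi> $ ((i div m)*n + t) * X $$ (i mod m, j mod m) * cnj (\<psi> $ ((j div m)*n + t)))"
        unfolding K_def by (intro sum.cong refl) (rule delta2[OF id(3,4)])
      also have "\<dots> = kron (rhoS n \<psi>) X $$ (i,j)"
        using i j X id by (simp add: kron_index rhoS_def sum_distrib_left mult_ac)
      finally show "kron (rhoS n \<psi>) X $$ (i, j) = mat (n*m) (n*m) (\<lambda>(a,b). \<Sum>c\<in>{..<n}. \<Sum>x<m. \<Sum>y<m. K c a x * X $$ (x,y) * cnj (K c b y)) $$ (i, j)"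
        using i j by simp
    qed (use X in \<open>auto simp: rhoS_def\<close>)
  qed simp
  fix X :: "complex mat" assume X: "X \<in> carrier_mat m m"
  show "mtrace (kron (rhoS n \<psi>) X) = mtrace X"
    using mtrace_kron[OF rhoS_carrier X] mtrace_rhoS[OF psi] by simp
qed

definition ptr :: "nat \<Rightarrow> nat \<Rightarrow> complex mat \<Rightarrow> complex mat" where
  "ptr n m Y = mat m m (\<lambda>(a,b). \<Sum>r<n. Y $$ (r*m+a, r*m+b))"

lemma ptr_channel: "is_channel (n*m) m (ptr n m)"
  unfolding is_channel_def
proof (intro conjI ballI)
  define K where "K r a x = (if x = r*m+a then 1 else (0::complex))" for r a x
  show "completely_positive (n*m) m (ptr n m)"
  proof (rule kraus_cp[where C = "{..<n}" and K = K])
    fix X :: "complex mat" assume X: "X \<in> carrier_mat (n*m) (n*m)"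
    show "ptr n m X = mat m m (\<lambda>(a,b). \<Sum>c\<in>{..<n}. \<Sum>x<n*m. \<Sum>y<n*m. K c a x * X $$ (x,y) * cnj (K c b y))"
    proof (rule eq_matI)
      fix a b assume a: "a < dim_row (mat m m (\<lambda>(a,b). \<Sum>c\<in>{..<n}. \<Sum>x<n*m. \<Sum>y<n*m. K c a x * X $$ (x,y) * cnj (K c b y)))"
        and b: "b < dim_col (mat m m (\<lambda>(a,b). \<Sum>c\<in>{..<n}. \<Sum>x<n*m. \<Sum>y<n*m. K c a x * X $$ (x,y) * cnj (K c b y)))"
      then have a: "a < m" and b: "b < m" by auto
      have "(\<Sum>c\<in>{..<n}. \<Sum>x<n*m. \<Sum>y<n*m. K c a x * X $$ (x,y) * cnj (K c b y)) = (\<Sum>r<n. 1 * X $$ (r*m+a, r*m+b) * cnj 1)"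
      proof (intro sum.cong refl)
        fix r assume r: "r \<in> {..<n}"
        have "(\<Sum>x<n*m. \<Sum>y<n*m. K r a x * X $$ (x,y) * cnj (K r b y))
           = (\<Sum>x<n*m. \<Sum>y<n*m. (1 * (if x = r*m+a then 1 else 0)) * X $$ (x,y) * cnj (1 * (if y = r*m+b then 1 else 0)))"
          unfolding K_def by simp
        also have "\<dots> = 1 * X $$ (r*m+a, r*m+b) * cnj 1" using r a b by (intro delta2 idx_lt) auto
        finally show "(\<Sum>x<n*m. \<Sum>y<n*m. K r a x * X $$ (x,y) * cnj (K r b y)) = 1 * X $$ (r*m+a, r*m+b) * cnj 1" .
      qed
      then show "ptr n m X $$ (a, b) = mat m m (\<lambda>(a,b). \<Sum>c\<in>{..<n}. \<Sum>x<n*m. \<Sum>y<n*m. K c a x * X $$ (x,y) * cnj (K c b y)) $$ (a, b)"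
        using a b unfolding ptr_def by simp
    qed (auto simp: ptr_def)
  qed simp
  fix X :: "complex mat" assume X: "X \<in> carrier_mat (n*m) (n*m)"
  have "mtrace (ptr n m X) = (\<Sum>a<m. \<Sum>r<n. X $$ (r*m+a, r*m+a))" unfolding mtrace_def ptr_def by simp
  also have "\<dots> = (\<Sum>r<n. \<Sum>a<m. X $$ (r*m+a, r*m+a))" by (rule sum.swap)
  also have "\<dots> = (\<Sum>i<n*m. X $$ (i, i))" by (rule sum_split[symmetric])
  also have "\<dots> = mtrace X" unfolding mtrace_def using X by simp
  finally show "mtrace (ptr n m X) = mtrace X" .
qed

lemma cp_psd: assumes cp: "completely_positive n m \<Phi>" and X: "psd n X"
  shows "psd m (\<Phi> X)"
proof -
  have Xc: "X \<in> carrier_mat n n" using X unfolding psd_def by auto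
  have lin: "\<Phi> X \<in> carrier_mat m m" using cp Xc unfolding completely_positive_def lin_map_def by auto
  have X1: "psd (1*n) X" using X by simp
  have "psd (1*m) (id_tensor 1 n m \<Phi> X)" using cp X1 unfolding completely_positive_def by blast
  moreover have "id_tensor 1 n m \<Phi> X = \<Phi> X"
  proof (rule eq_matI)
    fix i j assume i: "i < dim_row (\<Phi> X)" and j: "j < dim_col (\<Phi> X)"
    then have i: "i < m" and j: "j < m" using lin by auto
    have "blk n X 0 0 = X" using Xc by (auto simp: blk_def intro!: eq_matI)
    then show "id_tensor 1 n m \<Phi> X $$ (i, j) = \<Phi> X $$ (i, j)" using i j by (simp add: id_tensor_index)
  qed (use lin in \<open>auto simp: id_tensor_def\<close>)
  ultimately show ?thesis by (metis mult_1)
qed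

lemma lin_zero: assumes "lin_map n m \<Phi>" shows "\<Phi> (0\<^sub>m n n) = 0\<^sub>m m m"
proof -
  have z: "0\<^sub>m n n \<in> carrier_mat n n" by simp
  have c: "\<Phi> (0\<^sub>m n n) \<in> carrier_mat m m" using assms z unfolding lin_map_def by auto
  have "\<Phi> (0 \<cdot>\<^sub>m 0\<^sub>m n n + 0 \<cdot>\<^sub>m 0\<^sub>m n n) = 0 \<cdot>\<^sub>m \<Phi> (0\<^sub>m n n) + 0 \<cdot>\<^sub>m \<Phi> (0\<^sub>m n n)"
    using assms z unfolding lin_map_def by blast
  moreover have "0 \<cdot>\<^sub>m 0\<^sub>m n n + 0 \<cdot>\<^sub>m 0\<^sub>m n n = (0\<^sub>m n n :: complex mat)" by (auto intro!: eq_matI)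
  moreover have "0 \<cdot>\<^sub>m \<Phi> (0\<^sub>m n n) + 0 \<cdot>\<^sub>m \<Phi> (0\<^sub>m n n) = (0\<^sub>m m m :: complex mat)" using c by (auto intro!: eq_matI)
  ultimately show ?thesis by simp
qed


definition Emat :: "nat \<Rightarrow> nat \<times> nat \<Rightarrow> complex mat" where
  "Emat n p = mat n n (\<lambda>(i,j). if (i,j) = p then 1 else 0)"

lemma lin_expand_aux:
  assumes lin: "lin_map n m \<Phi>" and Y: "Y \<in> carrier_mat n n" and fin: "finite F" and sub: "F \<subseteq> {..<n} \<times> {..<n}"
  shows "\<forall>a<m. \<forall>b<m. \<Phi> (mat n n (\<lambda>p. if p \<in> F then Y $$ p else 0)) $$ (a,b)
            = (\<Sum>p\<in>F. Y $$ p * \<Phi> (Emat n p) $$ (a,b))"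
  using fin sub
proof (induction F rule: finite_induct)
  case empty
  have "mat n n (\<lambda>p. if p \<in> {} then Y $$ p else 0) = 0\<^sub>m n n" by (auto intro!: eq_matI)
  then show ?case using lin_zero[OF lin] by auto
next
  case (insert p F)
  let ?YF = "mat n n (\<lambda>p. if p \<in> F then Y $$ p else 0)"
  have pn: "fst p < n" "snd p < n" using insert.prems by auto
  have eq: "mat n n (\<lambda>q. if q \<in> insert p F then Y $$ q else 0) = 1 \<cdot>\<^sub>m ?YF + Y $$ p \<cdot>\<^sub>m Emat n p"
    using insert.hyps(2) by (auto intro!: eq_matI simp: Emat_def)
  have c1: "?YF \<in> carrier_mat n n" and c2: "Emat n p \<in> carrier_mat n n" by (auto simp: Emat_def)
  have lin2: "\<Phi> (1 \<cdot>\<^sub>m ?YF + Y $$ p \<cdot>\<^sub>m Emat n p) = 1 \<cdot>\<^sub>m \<Phi> ?YF + Y $$ p \<cdot>\<^sub>m \<Phi> (Emat n p)"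
    using lin c1 c2 unfolding lin_map_def by blast
  have d1: "\<Phi> ?YF \<in> carrier_mat m m" and d2: "\<Phi> (Emat n p) \<in> carrier_mat m m"
    using lin c1 c2 unfolding lin_map_def by auto
  show ?case
  proof (intro allI impI)
    fix a b assume a: "a < m" and b: "b < m"
    have "\<Phi> (mat n n (\<lambda>q. if q \<in> insert p F then Y $$ q else 0)) $$ (a,b)
        = \<Phi> ?YF $$ (a,b) + Y $$ p * \<Phi> (Emat n p) $$ (a,b)"
      unfolding eq lin2 using d1 d2 a b by simp
    also have "\<Phi> ?YF $$ (a,b) = (\<Sum>p\<in>F. Y $$ p * \<Phi> (Emat n p) $$ (a,b))" using insert.IH insert.prems a b by blast
    finally show "\<Phi> (mat n n (\<lambda>q. if q \<in> insert p F then Y $$ q else 0)) $$ (a,b) = (\<Sum>p\<in>insert p F. Y $$ p * \<Phi> (Emat n p) $$ (a,b))"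
      using insert.hyps by (simp add: add.commute)
  qed
qed

lemma lin_expand:
  assumes lin: "lin_map n m \<Phi>" and Y: "Y \<in> carrier_mat n n" and a: "a < m" and b: "b < m"
  shows "\<Phi> Y $$ (a,b) = (\<Sum>p\<in>{..<n} \<times> {..<n}. Y $$ p * \<Phi> (Emat n p) $$ (a,b))"
proof -
  have "mat n n (\<lambda>p. if p \<in> {..<n} \<times> {..<n} then Y $$ p else 0) = Y"
    using Y by (auto intro!: eq_matI)
  moreover have fin: "finite ({..<n} \<times> {..<n})" by simp
  ultimately show ?thesis using lin_expand_aux[OF lin Y fin subset_refl] a b by simp
qed

lemma lin_bound:
  assumes lin: "lin_map n m \<Phi>"
  shows "\<exists>B\<ge>0. \<forall>Y\<in>carrier_mat n n. (\<forall>c<n. \<forall>d<n. cmod (Y $$ (c,d)) \<le> 1) \<longrightarrow> (\<forall>a<m. \<forall>b<m. cmod (\<Phi> Y $$ (a,b)) \<le> B)"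
proof -
  define B where "B = (\<Sum>a<m. \<Sum>b<m. \<Sum>p\<in>{..<n} \<times> {..<n}. cmod (\<Phi> (Emat n p) $$ (a,b)))"
  have B0: "B \<ge> 0" unfolding B_def by (intro sum_nonneg) auto
  show ?thesis
  proof (rule exI[of _ B], intro conjI B0 ballI impI allI)
    fix Y a b assume Y: "Y \<in> carrier_mat n n" and Yb: "\<forall>c<n. \<forall>d<n. cmod (Y $$ (c,d)) \<le> 1" and a: "a < m" and b: "b < m"
    have "cmod (\<Phi> Y $$ (a,b)) = cmod (\<Sum>p\<in>{..<n} \<times> {..<n}. Y $$ p * \<Phi> (Emat n p) $$ (a,b))"
      unfolding lin_expand[OF lin Y a b] ..
    also have "\<dots> \<le> (\<Sum>p\<in>{..<n} \<times> {..<n}. cmod (Y $$ p * \<Phi> (Emat n p) $$ (a,b)))" by (rule norm_sum)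
    also have "\<dots> \<le> (\<Sum>p\<in>{..<n} \<times> {..<n}. cmod (\<Phi> (Emat n p) $$ (a,b)))"
    proof (rule sum_mono)
      fix p assume p: "p \<in> {..<n} \<times> {..<n}"
      have "cmod (Y $$ p) \<le> 1" using Yb p by (cases p) auto
      then show "cmod (Y $$ p * \<Phi> (Emat n p) $$ (a,b)) \<le> cmod (\<Phi> (Emat n p) $$ (a,b))"
        by (simp add: norm_mult mult_left_le_one_le)
    qed
    also have "\<dots> = (\<Sum>b'\<in>{b}. \<Sum>p\<in>{..<n} \<times> {..<n}. cmod (\<Phi> (Emat n p) $$ (a,b')))" by simp
    also have "\<dots> \<le> (\<Sum>b'<m. \<Sum>p\<in>{..<n} \<times> {..<n}. cmod (\<Phi> (Emat n p) $$ (a,b')))"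
      by (rule sum_mono2) (use b in \<open>auto intro!: sum_nonneg\<close>)
    also have "\<dots> = (\<Sum>a'\<in>{a}. \<Sum>b'<m. \<Sum>p\<in>{..<n} \<times> {..<n}. cmod (\<Phi> (Emat n p) $$ (a',b')))" by simp
    also have "\<dots> \<le> B" unfolding B_def
      by (rule sum_mono2) (use a in \<open>auto intro!: sum_nonneg\<close>)
    finally show "cmod (\<Phi> Y $$ (a,b)) \<le> B" .
  qed
qed

lemma unit_entry: assumes "\<psi> \<in> unit_vecs N" "i < N" shows "cmod (\<psi> $ i) \<le> 1"
proof -
  have "(cmod (\<psi> $ i))\<^sup>2 \<le> (\<Sum>j<N. (cmod (\<psi> $ j))\<^sup>2)"
    by (rule member_le_sum) (use assms(2) in auto)
  also have "\<dots> = 1" using assms(1) unfolding unit_vecs_def by simp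
  finally show ?thesis by (simp add: power_le_one_iff abs_le_square_iff)
qed

lemma diamond_bdd:
  assumes lin: "lin_map n m P"
  shows "bdd_above ((\<lambda>\<psi>. trace_norm (id_tensor n n m P (pure_dm \<psi>))) ` unit_vecs (n*n))"
proof -
  obtain B where B0: "B \<ge> 0" and B: "\<And>Y a b. Y \<in> carrier_mat n n \<Longrightarrow> (\<forall>c<n. \<forall>d<n. cmod (Y $$ (c,d)) \<le> 1) \<Longrightarrow> a < m \<Longrightarrow> b < m \<Longrightarrow> cmod (P Y $$ (a,b)) \<le> B"
    using lin_bound[OF lin] by blast
  show ?thesis
  proof (rule bdd_aboveI2)
    fix \<psi> assume psi: "\<psi> \<in> unit_vecs (n*n)"
    have pc: "\<psi> \<in> carrier_vec (n*n)" using psi unfolding unit_vecs_def by auto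
    define X where "X = id_tensor n n m P (pure_dm \<psi>)"
    have Xc: "X \<in> carrier_mat (n*m) (n*m)" unfolding X_def by (rule id_tensor_carrier)
    have ent: "cmod (X $$ (k,i)) \<le> B" if k: "k < n*m" and i: "i < n*m" for k i
    proof -
      have id: "k div m < n" "i div m < n" "k mod m < m" "i mod m < m" using i k by (auto simp: div_lt mod_lt)
      have bb: "\<forall>c<n. \<forall>d<n. cmod (blk n (pure_dm \<psi>) (k div m) (i div m) $$ (c,d)) \<le> 1"
      proof (intro allI impI)
        fix c d assume c: "c < n" and d: "d < n"
        have l1: "(k div m)*n + c < n*n" "(i div m)*n + d < n*n" using id c d by (auto intro: idx_lt)
        have "cmod (blk n (pure_dm \<psi>) (k div m) (i div m) $$ (c,d)) = cmod (\<psi> $ ((k div m)*n + c)) * cmod (\<psi> $ ((i div m)*n + d))"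
          using c d l1 pc by (simp add: blk_index pure_dm_index norm_mult)
        also have "\<dots> \<le> 1" using unit_entry[OF psi l1(1)] unit_entry[OF psi l1(2)] by (simp add: mult_le_one)
        finally show "cmod (blk n (pure_dm \<psi>) (k div m) (i div m) $$ (c,d)) \<le> 1" .
      qed
      have "X $$ (k,i) = P (blk n (pure_dm \<psi>) (k div m) (i div m)) $$ (k mod m, i mod m)"
        unfolding X_def using k i by (simp add: id_tensor_index)
      then show ?thesis using B[OF blk_carrier bb id(3,4)] by simp
    qed
    have "trace_norm X \<le> (real (n*m) + (\<Sum>i<n*m. \<Sum>k<n*m. (cmod (X$$(k,i)))\<^sup>2)) / 2" by (rule tn_bound[OF Xc])
    also have "\<dots> \<le> (real (n*m) + (\<Sum>i<n*m. \<Sum>k<n*m. B\<^sup>2)) / 2"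
      using ent by (intro divide_right_mono add_left_mono sum_mono power_mono) auto
    finally show "trace_norm (id_tensor n n m P (pure_dm \<psi>)) \<le> (real (n*m) + (\<Sum>i<n*m. \<Sum>k<n*m. B\<^sup>2)) / 2"
      unfolding X_def .
  qed
qed

lemma lin_comp: "lin_map a b f \<Longrightarrow> lin_map b c g \<Longrightarrow> lin_map a c (g \<circ> f)"
  unfolding lin_map_def by auto


lemma ptr_kron: assumes A: "A \<in> carrier_mat n n" and Z: "Z \<in> carrier_mat m m"
  shows "ptr n m (kron A Z) = mtrace A \<cdot>\<^sub>m Z"
proof (rule eq_matI)
  fix a b assume a: "a < dim_row (mtrace A \<cdot>\<^sub>m Z)" and b: "b < dim_col (mtrace A \<cdot>\<^sub>m Z)"
  then have a: "a < m" and b: "b < m" using Z by auto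
  have "ptr n m (kron A Z) $$ (a,b) = (\<Sum>r<n. kron A Z $$ (r*m+a, r*m+b))" unfolding ptr_def using a b by simp
  also have "\<dots> = (\<Sum>r<n. A $$ (r,r) * Z $$ (a,b))"
    using A Z a b by (intro sum.cong refl) (simp add: kron_index idx_lt)
  also have "\<dots> = (mtrace A \<cdot>\<^sub>m Z) $$ (a,b)" unfolding mtrace_def using A Z a b by (simp add: sum_distrib_right)
  finally show "ptr n m (kron A Z) $$ (a,b) = (mtrace A \<cdot>\<^sub>m Z) $$ (a,b)" .
qed (use Z in \<open>auto simp: ptr_def\<close>)

lemma E0_index: "i < N \<Longrightarrow> j < N \<Longrightarrow> pure_dm (unit_vec N 0 :: complex vec) $$ (i,j) = (if i = 0 \<and> j = 0 then 1 else 0)"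
  by (simp add: pure_dm_index unit_vec_def)

lemma E0_carrier: "pure_dm (unit_vec N 0 :: complex vec) \<in> carrier_mat N N"
  unfolding pure_dm_def by simp

lemma blk_E0: assumes n0: "0 < n" and r: "r < n" and s: "s < n"
  shows "blk n (pure_dm (unit_vec (n*n) 0 :: complex vec)) r s = (if r = 0 \<and> s = 0 then pure_dm (unit_vec n 0) else 0\<^sub>m n n)"
proof (rule eq_matI)
  fix c d assume c: "c < dim_row (if r = 0 \<and> s = 0 then pure_dm (unit_vec n 0 :: complex vec) else 0\<^sub>m n n)"
    and d: "d < dim_col (if r = 0 \<and> s = 0 then pure_dm (unit_vec n 0 :: complex vec) else 0\<^sub>m n n)"
  then have c: "c < n" and d: "d < n" by (auto simp: pure_dm_def split: if_splits)
  have l: "r*n+c < n*n" "s*n+d < n*n" using r s c d by (auto intro: idx_lt)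
  have z1: "r*n+c = 0 \<longleftrightarrow> r = 0 \<and> c = 0" using n0 by auto
  have z2: "s*n+d = 0 \<longleftrightarrow> s = 0 \<and> d = 0" using n0 by auto
  show "blk n (pure_dm (unit_vec (n*n) 0 :: complex vec)) r s $$ (c, d) = (if r = 0 \<and> s = 0 then pure_dm (unit_vec n 0) else 0\<^sub>m n n) $$ (c, d)"
    using c d l unfolding blk_index[OF c d] by (auto simp: E0_index z1 z2)
qed (auto simp: blk_def pure_dm_def)

lemma rhoS_E0: assumes n0: "0 < n"
  shows "rhoS n (unit_vec (n*n) 0) = pure_dm (unit_vec n 0 :: complex vec)"
proof (rule eq_matI)
  fix r s assume r: "r < dim_row (pure_dm (unit_vec n 0 :: complex vec))" and s: "s < dim_col (pure_dm (unit_vec n 0 :: complex vec))"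
  then have r: "r < n" and s: "s < n" by (auto simp: pure_dm_def)
  have "rhoS n (unit_vec (n*n) 0) $$ (r,s) = (\<Sum>t<n. unit_vec (n*n) 0 $ (r*n+t) * cnj (unit_vec (n*n) 0 $ (s*n+t)))"
    unfolding rhoS_def using r s by simp
  also have "\<dots> = (\<Sum>t<n. if t = 0 then (if r = 0 \<and> s = 0 then 1 else 0) else 0)"
    using r s n0 by (intro sum.cong refl) (auto simp: unit_vec_def idx_lt)
  also have "\<dots> = (if r = 0 \<and> s = 0 then 1 else 0)" using n0 by simp
  also have "\<dots> = pure_dm (unit_vec n 0 :: complex vec) $$ (r,s)" using r s by (simp add: E0_index)
  finally show "rhoS n (unit_vec (n*n) 0) $$ (r,s) = pure_dm (unit_vec n 0 :: complex vec) $$ (r,s)" .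
qed (auto simp: rhoS_def pure_dm_def)

lemma ptrans_E0: assumes dY: "0 < dY"
  shows "ptrans dX dY (pure_dm (unit_vec (dX*dY) 0 :: complex vec)) = pure_dm (unit_vec (dX*dY) 0)"
proof (rule eq_matI)
  fix i j assume i: "i < dim_row (pure_dm (unit_vec (dX*dY) 0 :: complex vec))" and j: "j < dim_col (pure_dm (unit_vec (dX*dY) 0 :: complex vec))"
  then have i: "i < dX*dY" and j: "j < dX*dY" by (auto simp: pure_dm_def)
  have l: "(i div dY) * dY + j mod dY < dX*dY" "(j div dY) * dY + i mod dY < dX*dY" using i j by (auto intro: ptrans_idx)
  have z1: "(i div dY) * dY + j mod dY = 0 \<and> (j div dY) * dY + i mod dY = 0 \<longleftrightarrow> i = 0 \<and> j = 0"
    using dY by (auto simp: div_eq_0_iff)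
  show "ptrans dX dY (pure_dm (unit_vec (dX*dY) 0 :: complex vec)) $$ (i, j) = pure_dm (unit_vec (dX*dY) 0 :: complex vec) $$ (i, j)"
    unfolding ptrans_index[OF i j] E0_index[OF l] E0_index[OF i j] z1 by (rule refl)
qed (auto simp: ptrans_def pure_dm_def)

lemma ptrans_zero: "ptrans dX dY (0\<^sub>m (dX*dY) (dX*dY)) = (0\<^sub>m (dX*dY) (dX*dY) :: complex mat)"
  by (rule eq_matI) (auto simp: ptrans_def ptrans_idx)


theorem mainTheorem7:
  fixes dA' dB' dA dB :: nat and \<omega> :: "complex mat"
    and D :: "complex mat \<Rightarrow> complex mat \<Rightarrow> ereal"
    and N :: "complex mat \<Rightarrow> complex mat"
  assumes "dA' > 0" "dB' > 0" "dA > 0" "dB > 0"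
    and "is_state (dA*dB) \<omega>"
    and "gen_divergence D"
    and "N = (\<lambda>\<rho>. mtrace \<rho> \<cdot>\<^sub>m \<omega>)"
  shows "EN_map dA' dB' dA dB N = EN_state dA dB \<omega>
       \<and> Rains_map D dA' dB' dA dB N = Rains_state D dA dB \<omega>"
proof -
  define n where "n = dA'*dB'"
  define m where "m = dA*dB"
  have n0: "0 < n" and m0: "0 < m" using assms unfolding n_def m_def by auto
  have wp: "psd m \<omega>" and wt: "mtrace \<omega> = 1" using assms(5) unfolding is_state_def m_def by auto
  have wc: "\<omega> \<in> carrier_mat m m" using wp unfolding psd_def by auto
  have Nrep: "\<And>Y. Y \<in> carrier_mat n n \<Longrightarrow> N Y = mtrace Y \<cdot>\<^sub>m \<omega>" using assms(7) by simp
  have DPI: "\<And>k l E \<rho> \<sigma>. is_channel k l E \<Longrightarrow> is_state k \<rho> \<Longrightarrow> psd k \<sigma> \<Longrightarrow> D (E \<rho>) (E \<sigma>) \<le> D \<rho> \<sigma>"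
    using assms(6) unfolding gen_divergence_def by blast
  have part1: "EN_map dA' dB' dA dB N = EN_state dA dB \<omega>"
    unfolding assms(7) by (rule EN_rep) (use wc n0 in \<open>auto simp: m_def n_def\<close>)
  have le1: "Rains_map D dA' dB' dA dB N \<le> Rains_state D dA dB \<omega>"
    unfolding Rains_map_def Rains_state_def
  proof (rule INF_mono)
    fix \<sigma> assume "\<sigma> \<in> {\<sigma>. psd (dA*dB) \<sigma> \<and> EN_state dA dB \<sigma> \<le> 0}"
    then have sp: "psd m \<sigma>" and se: "EN_state dA dB \<sigma> \<le> 0" unfolding m_def by auto
    have sc: "\<sigma> \<in> carrier_mat m m" using sp unfolding psd_def by auto
    define M where "M = (\<lambda>\<rho>::complex mat. mtrace \<rho> \<cdot>\<^sub>m \<sigma>)"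
    have Mcp: "completely_positive (dA'*dB') (dA*dB) M" unfolding M_def using rep_cp[OF sp] unfolding m_def .
    have Men: "EN_map dA' dB' dA dB M \<le> 0" unfolding M_def
      using EN_rep[of \<sigma> dA dB dA' dB'] sc n0 se unfolding m_def n_def by simp
    have "chan_div D (dA'*dB') (dA*dB) N M \<le> D \<omega> \<sigma>"
      unfolding chan_div_def n_def[symmetric] m_def[symmetric]
    proof (rule SUP_least)
      fix \<psi> assume psi: "\<psi> \<in> unit_vecs (n*n)"
      have pc: "\<psi> \<in> carrier_vec (n*n)" using psi unfolding unit_vecs_def by auto
      have o1: "id_tensor n n m N (pure_dm \<psi>) = kron (rhoS n \<psi>) \<omega>" by (rule out_rep[OF wc pc Nrep])
      have o2: "id_tensor n n m M (pure_dm \<psi>) = kron (rhoS n \<psi>) \<sigma>" by (rule out_rep[OF sc pc]) (simp add: M_def)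
      have ch: "is_channel m (n*m) (\<lambda>X. kron (rhoS n \<psi>) X)" by (rule app_channel[OF psi])
      have st: "is_state m \<omega>" using assms(5) unfolding m_def .
      show "D (id_tensor n n m N (pure_dm \<psi>)) (id_tensor n n m M (pure_dm \<psi>)) \<le> D \<omega> \<sigma>"
        unfolding o1 o2 using DPI[OF ch st sp] by simp
    qed
    then show "\<exists>M\<in>{M. completely_positive (dA'*dB') (dA*dB) M \<and> EN_map dA' dB' dA dB M \<le> 0}. chan_div D (dA'*dB') (dA*dB) N M \<le> D \<omega> \<sigma>"
      using Mcp Men by blast
  qed
  have le2: "Rains_state D dA dB \<omega> \<le> Rains_map D dA' dB' dA dB N"
    unfolding Rains_map_def Rains_state_def
  proof (rule INF_mono)
    fix M assume "M \<in> {M. completely_positive (dA'*dB') (dA*dB) M \<and> EN_map dA' dB' dA dB M \<le> 0}"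
    then have Mcp: "completely_positive n m M" and Men: "EN_map dA' dB' dA dB M \<le> 0" unfolding n_def m_def by auto
    have Mlin: "lin_map n m M" using Mcp unfolding completely_positive_def by auto
    define \<psi>0 where "\<psi>0 = (unit_vec (n*n) 0 :: complex vec)"
    define E where "E = pure_dm (unit_vec n 0 :: complex vec)"
    define \<sigma> where "\<sigma> = M E"
    have psi0: "\<psi>0 \<in> unit_vecs (n*n)" unfolding \<psi>0_def by (rule unit_vec_unit) (use n0 in simp)
    have p0c: "\<psi>0 \<in> carrier_vec (n*n)" unfolding \<psi>0_def by simp
    have Ec: "E \<in> carrier_mat n n" unfolding E_def by (rule E0_carrier)
    have Ep: "psd n E" unfolding E_def by (rule psd_pure) simp
    have rho0: "rhoS n \<psi>0 = E" unfolding \<psi>0_def E_def by (rule rhoS_E0[OF n0])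
    have Et: "mtrace E = 1" using mtrace_rhoS[OF psi0] rho0 by simp
    have sp: "psd m \<sigma>" unfolding \<sigma>_def by (rule cp_psd[OF Mcp Ep])
    have sc: "\<sigma> \<in> carrier_mat m m" using sp unfolding psd_def by auto
    have oN: "id_tensor n n m N (pure_dm \<psi>0) = kron E \<omega>"
      using out_rep[OF wc p0c Nrep] rho0 by simp
    define Y where "Y = id_tensor n n m M (pure_dm \<psi>0)"
    have Yp: "psd (n*m) Y"
      using Mcp psd_pure[OF p0c] unfolding Y_def completely_positive_def by blast
    have st: "is_state (n*m) (kron E \<omega>)"
    proof -
      have "psd (n*m) (kron (rhoS n \<psi>0) \<omega>)"
        by (rule cp_psd[OF _ wp]) (use app_channel[OF psi0] in \<open>auto simp: is_channel_def\<close>)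
      moreover have "mtrace (kron E \<omega>) = 1" using mtrace_kron[OF Ec wc] Et wt by simp
      ultimately show ?thesis unfolding is_state_def rho0 by simp
    qed
    have "1 \<cdot>\<^sub>m \<omega> = \<omega>" using wc by (auto intro!: eq_matI)
    then have tr1: "ptr n m (kron E \<omega>) = \<omega>" using ptr_kron[OF Ec wc] Et by simp
    have tr2: "ptr n m Y = \<sigma>"
    proof (rule eq_matI)
      fix a b assume a: "a < dim_row \<sigma>" and b: "b < dim_col \<sigma>"
      then have a: "a < m" and b: "b < m" using sc by auto
      have "ptr n m Y $$ (a,b) = (\<Sum>r<n. Y $$ (r*m+a, r*m+b))" unfolding ptr_def using a b by simp
      also have "\<dots> = (\<Sum>r<n. if r = 0 then \<sigma> $$ (a,b) else 0)"
      proof (intro sum.cong refl)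
        fix r assume r: "r \<in> {..<n}"
        have "Y $$ (r*m+a, r*m+b) = M (blk n (pure_dm \<psi>0) r r) $$ (a,b)"
          unfolding Y_def using r a b by (simp add: id_tensor_index idx_lt)
        also have "\<dots> = (if r = 0 then \<sigma> $$ (a,b) else 0)"
          using r a b blk_E0[OF n0, of r r] lin_zero[OF Mlin]
          by (auto simp: \<psi>0_def \<sigma>_def E_def)
        finally show "Y $$ (r*m+a, r*m+b) = (if r = 0 then \<sigma> $$ (a,b) else 0)" .
      qed
      also have "\<dots> = \<sigma> $$ (a,b)" using n0 by simp
      finally show "ptr n m Y $$ (a,b) = \<sigma> $$ (a,b)" .
    qed (use sc in \<open>auto simp: ptr_def\<close>)
    have dpi: "D \<omega> \<sigma> \<le> D (kron E \<omega>) Y"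
      using DPI[OF ptr_channel st Yp] tr1 tr2 by simp
    have "D (kron E \<omega>) Y \<le> chan_div D n m N M"
      unfolding chan_div_def using psi0 oN Y_def by (auto intro: SUP_upper2)
    then have le: "D \<omega> \<sigma> \<le> chan_div D n m N M" using dpi by simp
    have feas: "EN_state dA dB \<sigma> \<le> 0"
    proof -
      define P where "P = ptrans dA dB \<circ> M \<circ> ptrans dA' dB'"
      have Plin: "lin_map n m P" unfolding P_def n_def m_def
        by (intro lin_comp[OF _ ptrans_lin] lin_comp[OF ptrans_lin]) (use Mlin in \<open>simp add: n_def m_def\<close>)
      define W where "W = ptrans dA dB \<sigma>"
      have Wc: "W \<in> carrier_mat m m" unfolding W_def m_def by (rule ptrans_carrier)
      have elem: "id_tensor n n m P (pure_dm \<psi>0) = kron E W"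
      proof (rule eq_matI)
        fix i j assume i: "i < dim_row (kron E W)" and j: "j < dim_col (kron E W)"
        then have i: "i < n*m" and j: "j < n*m" using Ec Wc by auto
        have id: "i div m < n" "j div m < n" "i mod m < m" "j mod m < m" using i j by (auto simp: div_lt mod_lt)
        have PE: "P E = W"
          unfolding P_def W_def \<sigma>_def E_def n_def using ptrans_E0[of dB' dA'] assms(2) by simp
        have P0: "P (0\<^sub>m n n) = 0\<^sub>m m m"
          unfolding P_def n_def m_def using ptrans_zero[of dA' dB'] ptrans_zero[of dA dB] lin_zero[OF Mlin]
          by (simp add: n_def m_def)
        have "id_tensor n n m P (pure_dm \<psi>0) $$ (i,j) = P (blk n (pure_dm \<psi>0) (i div m) (j div m)) $$ (i mod m, j mod m)"
          using i j by (simp add: id_tensor_index)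
        also have "\<dots> = (if i div m = 0 \<and> j div m = 0 then W $$ (i mod m, j mod m) else 0)"
          using blk_E0[OF n0 id(1,2)] PE P0 id unfolding \<psi>0_def E_def[symmetric] by auto
        also have "\<dots> = kron E W $$ (i,j)"
          using i j Ec Wc id by (simp add: kron_index E_def E0_index)
        finally show "id_tensor n n m P (pure_dm \<psi>0) $$ (i,j) = kron E W $$ (i,j)" .
      qed (use Ec Wc in \<open>auto simp: id_tensor_def\<close>)
      have tE: "trace_norm E = 1" using tn_rhoS[OF psi0] rho0 by simp
      define t where "t = trace_norm W"
      have t0: "t \<ge> 0" unfolding t_def by (rule tn_nonneg[OF Wc])
      have tin: "t \<in> (\<lambda>\<psi>. trace_norm (id_tensor n n m P (pure_dm \<psi>))) ` unit_vecs (n*n)"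
        using psi0 elem tn_kron[OF Ec Wc] tE unfolding t_def by force
      have tle: "t \<le> diamond_norm n m P"
        unfolding diamond_norm_def by (rule cSup_upper[OF tin diamond_bdd[OF Plin]])
      have dle: "log 2 (diamond_norm n m P) \<le> 0" using Men unfolding EN_map_def P_def n_def m_def .
      have "log 2 t \<le> 0"
      proof (cases "t = 0")
        case True then show ?thesis by (simp add: log_def)
      next
        case False
        then have tp: "t > 0" using t0 by simp
        then have "diamond_norm n m P > 0" using tle by simp
        then have "diamond_norm n m P \<le> 1" using dle by simp
        then show ?thesis using tle tp by simp
      qed
      then show ?thesis unfolding EN_state_def t_def W_def .
    qed
    show "\<exists>\<sigma>\<in>{\<sigma>. psd (dA*dB) \<sigma> \<and> EN_state dA dB \<sigma> \<le> 0}. D \<omega> \<sigma> \<le> chan_div D (dA'*dB') (dA*dB) N M"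
      using sp feas le unfolding n_def m_def by blast
  qed
  show ?thesis using part1 le1 le2 by simp
qed


end
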